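(* Let $\alpha>2$ and $0<N_1\le N_2$. Consider the two-player Variable-Rate Random Access Game in which player $i\in\{1,2\}$ chooses $\Lambda_i\in[0,N_i]$ and receives payoff \[ U_i(\Lambda_1,\Lambda_2)=\Lambda_i\int_0^\infty e^{-(\Lambda_1+\Lambda_2)x^{2/\alpha}}\frac{dx}{1+x}. \] Define $\Lambda''(\alpha)$, for $\alpha>4$, as the unique solution $\Lambda''>0$ of \[ \int_0^\infty\frac{1-\Lambda'' x^{2/\alpha}}{1+x}\,e^{-2\Lambda'' x^{2/\alpha}}\,dx=0, \] and set $\Lambda''(\alpha)=+\infty$ for $\alpha\le 4$. Let $\hat\Lambda$ denote the unique solution $\Lambda>0$ of \[ \int_0^\infty\frac{1-\Lambda x^{2/\alpha}}{1+x}\,e^{-(N_1+\Lambda)x^{2/\alpha}}\,dx=0. \] Then the game has a unique Nash equilibrium $(\Lambda_1^*,\Lambda_2^* )$, and: (i) (Full/Full reuse) if $N_1\le\Lambda''(\alpha)$ and $N_2\le\hat\Lambda$, then $(\Lambda_1^*,\Lambda_2^* )=(N_1,N_2)$; (ii) (Full/Partial reuse) if $N_1\le\Lambda''(\alpha)$ and $N_2>\hat\Lambda$, then $\Lambda_1^*=N_1$ and $\Lambda_2^*=\hat\Lambda$; (iii) (Partial/Partial reuse) if $N_1>\Lambda''(\alpha)$, then $(\Lambda_1^*,\Lambda_2^* )=(\Lambda''(\alpha),\Lambda''(\alpha))$.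
   Context: A Nash equilibrium is a pair $(\Lambda_1^*,\Lambda_2^* )\in[0,N_1]\times[0,N_2]$ such that $\Lambda_1^*$ maximizes $U_1(\cdot,\Lambda_2^* )$ over $[0,N_1]$ and $\Lambda_2^*$ maximizes $U_2(\Lambda_1^*,\cdot)$ over $[0,N_2]$. *)

theory Defs
  imports "HOL-Analysis.Analysis"
begin

definition vrag_kernel :: "real \<Rightarrow> real \<Rightarrow> real" where
  "vrag_kernel \<alpha> L = (LBINT x:{0..}. exp (- L * x powr (2 / \<alpha>)) / (1 + x))"

definition U1 :: "real \<Rightarrow> real \<Rightarrow> real \<Rightarrow> real" where
  "U1 \<alpha> l1 l2 = l1 * vrag_kernel \<alpha> (l1 + l2)"

definition U2 :: "real \<Rightarrow> real \<Rightarrow> real \<Rightarrow> real" where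
  "U2 \<alpha> l1 l2 = l2 * vrag_kernel \<alpha> (l1 + l2)"

definition is_nash :: "real \<Rightarrow> real \<Rightarrow> real \<Rightarrow> real \<Rightarrow> real \<Rightarrow> bool" where
  "is_nash \<alpha> N1 N2 l1 l2 \<longleftrightarrow>
     l1 \<in> {0..N1} \<and> l2 \<in> {0..N2} \<and>
     (\<forall>m1\<in>{0..N1}. U1 \<alpha> m1 l2 \<le> U1 \<alpha> l1 l2) \<and>
     (\<forall>m2\<in>{0..N2}. U2 \<alpha> l1 m2 \<le> U2 \<alpha> l1 l2)"

definition Lambda_pp :: "real \<Rightarrow> ereal" where
  "Lambda_pp \<alpha> = (if \<alpha> > 4 then
     ereal (THE L. L > 0 \<and>
        (LBINT x:{0..}. (1 - L * x powr (2 / \<alpha>)) / (1 + x) * exp (- 2 * L * x powr (2 / \<alpha>))) = 0)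
   else \<infinity>)"

definition Lambda_hat :: "real \<Rightarrow> real \<Rightarrow> real" where
  "Lambda_hat \<alpha> N1 = (THE L. L > 0 \<and>
     (LBINT x:{0..}. (1 - L * x powr (2 / \<alpha>)) / (1 + x) * exp (- (N1 + L) * x powr (2 / \<alpha>))) = 0)"

end

theory Submission imports Defs "HOL-Probability.Sinc_Integral" begin

lemma powr_exp_bound:
  fixes r S t :: real
  assumes "r > 0" "S > 0" "t \<ge> 0"
  shows "t powr r * exp (- S * t) \<le> (r / S) powr r"
proof -
  have "(S/r) * t \<le> exp ((S/r) * t)"
    using exp_ge_add_one_self[of "(S/r)*t"] by linarith
  hence "t \<le> (r/S) * exp ((S/r) * t)" using assms by (simp add: field_simps)
  hence 1: "t * exp (- (S/r) * t) \<le> r / S"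
    by (simp add: exp_minus field_simps)
  have "t powr r * exp (- S * t) = (t * exp (- (S/r) * t)) powr r"
    using assms by (simp add: powr_mult exp_powr_real)
  also have "\<dots> \<le> (r/S) powr r"
    using 1 assms by (intro powr_mono2) auto
  finally show ?thesis .
qed

lemma integrable_inv_sq: "set_integrable lborel {0..} (\<lambda>x::real. inverse (1 + x^2))"
  using integrable_inverse_1_plus_square
  by (rule set_integrable_subset) auto

lemma set_integrable_dom:
  fixes f :: "real \<Rightarrow> real"
  assumes "continuous_on {0..} f" "\<And>x. x \<ge> 0 \<Longrightarrow> \<bar>f x\<bar> * (1 + x^2) \<le> M"
  shows "set_integrable lborel {0..} f"
proof (rule set_integrable_bound[OF set_integrable_mult_right[OF integrable_inv_sq, of M]])
  show "set_borel_measurable lborel {0..} f"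
    using assms(1) using set_measurable_continuous_on[of "{0..}" f] unfolding set_borel_measurable_def by simp
  show "AE x in lborel. x \<in> {0..} \<longrightarrow> norm (f x) \<le> norm (M * inverse (1 + x\<^sup>2))"
  proof (intro AE_I2 impI)
    fix x :: real assume "x \<in> {0..}"
    hence x: "x \<ge> 0" by auto
    have p: "1 + x^2 > 0" by (simp add: add_pos_nonneg)
    have "\<bar>f x\<bar> \<le> M / (1 + x^2)" using assms(2)[OF x] p by (simp add: field_simps)
    moreover have "M \<ge> 0" using assms(2)[OF x] p by (smt (verit) abs_ge_zero mult_nonneg_nonneg)
    ultimately show "norm (f x) \<le> norm (M * inverse (1 + x\<^sup>2))" using p
      by (simp add: divide_inverse abs_mult)
  qed
qed

lemma ratio_le: "x \<ge> 0 \<Longrightarrow> e \<ge> 0 \<Longrightarrow> e / (1+x) * (1 + x^2) \<le> (1+x) * (e::real)"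
  by (simp add: field_simps power2_eq_square mult_left_mono)

lemma sq_div_le: "(x::real) \<ge> 0 \<Longrightarrow> q \<ge> 0 \<Longrightarrow> q/(1+x)^2 \<le> q/(1+x)"
  by (intro divide_left_mono) (auto simp: power2_eq_square)

lemma set_integral_pos_tail:
  fixes f :: "real \<Rightarrow> real"
  assumes int: "set_integrable lborel {0..} f" and nn: "\<And>x. x \<ge> 0 \<Longrightarrow> f x \<ge> 0"
    and c: "c \<ge> 0" and pos: "\<And>x. x > c \<Longrightarrow> f x > 0"
  shows "(LBINT x:{0..}. f x) > 0"
proof -
  let ?g = "\<lambda>x. indicator {0..} x *\<^sub>R f x"
  have ig: "integrable lborel ?g" using int by (simp add: set_integrable_def)
  have nng: "AE x in lborel. 0 \<le> ?g x" using nn by (intro AE_I2) (auto simp: indicator_def)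
  have ge: "0 \<le> integral\<^sup>L lborel ?g" using nng by (intro integral_nonneg_AE) auto
  have "integral\<^sup>L lborel ?g \<noteq> 0"
  proof
    assume "integral\<^sup>L lborel ?g = 0"
    hence "AE x in lborel. ?g x = 0" using integral_nonneg_eq_0_iff_AE[OF ig nng] by simp
    then obtain N where N: "{x \<in> space lborel. \<not> ?g x = 0} \<subseteq> N" "emeasure lborel N = 0" "N \<in> sets lborel"
      by (rule AE_E)
    have "{c<..<c+1} \<subseteq> N"
    proof
      fix x assume "x \<in> {c<..<c+1}"
      hence "x > c" by auto
      hence "?g x \<noteq> 0" using pos[of x] c by (auto simp: indicator_def)
      thus "x \<in> N" using N(1) by auto
    qed
    hence "emeasure lborel {c<..<c+1} \<le> emeasure lborel N" using N(3) by (rule emeasure_mono)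
    thus False using N(2) by simp
  qed
  with ge show ?thesis by (simp add: set_lebesgue_integral_def)
qed

definition kB :: "real \<Rightarrow> real \<Rightarrow> real" where
  "kB \<alpha> S = (LBINT x:{0..}. x powr (2/\<alpha>) * exp (- S * x powr (2/\<alpha>)) / (1+x))"
definition kC :: "real \<Rightarrow> real \<Rightarrow> real" where
  "kC \<alpha> S = (LBINT x:{0..}. exp (- S * x powr (2/\<alpha>)) / (1+x)^2)"
definition kC1 :: "real \<Rightarrow> real \<Rightarrow> real" where
  "kC1 \<alpha> S = (LBINT x:{0..}. x powr (2/\<alpha>) * exp (- S * x powr (2/\<alpha>)) / (1+x)^2)"

lemma sint_lin:
  fixes f g :: "real \<Rightarrow> real"
  assumes "set_integrable lborel A f" "set_integrable lborel A g"
  shows "set_integrable lborel A (\<lambda>x. f x - c * g x)"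
    "(LBINT x:A. f x - c * g x) = (LBINT x:A. f x) - c * (LBINT x:A. g x)"
proof -
  have g: "set_integrable lborel A (\<lambda>x. c * g x)" using assms(2) by auto
  show "set_integrable lborel A (\<lambda>x. f x - c * g x)" using set_integral_diff(1)[OF assms(1) g] .
  show "(LBINT x:A. f x - c * g x) = (LBINT x:A. f x) - c * (LBINT x:A. g x)"
    using set_integral_diff(2)[OF assms(1) g] by simp
qed

lemma pt_ineq:
  fixes d e e' c p :: real
  assumes "d > 0" "e' \<ge> e * (1 - c * p)"
  shows "e/d - c*(p*e/d) \<le> e'/d"
proof -
  have "e/d - c*(p*e/d) = e * (1 - c * p) / d" using assms(1) by (simp add: field_simps)
  also have "\<dots> \<le> e'/d" using assms by (intro divide_right_mono) auto
  finally show ?thesis .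
qed

lemma aux_cancel: "(x::real) > 0 \<Longrightarrow> a*(2*E)/(b + b*x) = a*(x*(2*E))/(b*x + b*(x*x))"
proof -
  assume x: "x > 0"
  have 1: "a*(x*(2*E)) = x * (a*(2*E))" by (simp add: algebra_simps)
  have 2: "b*x + b*(x*x) = x * (b + b*x)" by (simp add: algebra_simps)
  show ?thesis unfolding 1 2 using x by simp
qed

lemma ae_0: "AE x in lborel. ((x::real) \<in> {0..}) = (x \<in> {0<..})"
  by (rule eventually_mono[OF AE_lborel_singleton[of "0::real"]]) (auto simp: less_le)

lemma isCont_from_lip:
  fixes f :: "real \<Rightarrow> real"
  assumes e: "e > 0" and b: "\<And>h. \<bar>h\<bar> < e \<Longrightarrow> \<bar>f (x+h) - f x\<bar> \<le> \<bar>h\<bar> * K"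
  shows "isCont f x"
proof -
  have ev: "\<forall>\<^sub>F h in at 0. norm (f (x+h) - f x) \<le> \<bar>h\<bar> * K"
    unfolding eventually_at using e b by (auto simp: dist_real_def)
  have "((\<lambda>h. \<bar>h\<bar> * K) \<longlongrightarrow> \<bar>0\<bar> * K) (at (0::real))"
    by (intro tendsto_intros)
  hence "((\<lambda>h. \<bar>h\<bar> * K) \<longlongrightarrow> 0) (at (0::real))" by simp
  hence "((\<lambda>h. f (x+h) - f x) \<longlongrightarrow> 0) (at 0)" by (rule Lim_null_comparison[OF ev])
  thus ?thesis unfolding isCont_iff LIM_zero_iff .
qed

definition kK :: "real \<Rightarrow> real \<Rightarrow> real \<Rightarrow> real" where
  "kK \<alpha> S c = vrag_kernel \<alpha> S - c * kC \<alpha> S"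

definition Dv :: "real \<Rightarrow> real \<Rightarrow> real \<Rightarrow> real" where
  "Dv \<alpha> a l = vrag_kernel \<alpha> (a+l) - l * kB \<alpha> (a+l)"

lemma rearr: "(x::real) \<ge> 0 \<Longrightarrow> (1 - l*p)/(1+x) * e = e/(1+x) - l*(p*e/(1+x))"
proof -
  assume x: "x \<ge> 0"
  have g: "d \<noteq> 0 \<Longrightarrow> (1 - l*p)/d * e = e/d - l*(p*e/d)" for d :: real by (simp add: field_simps)
  show ?thesis using g[of "1+x"] x by simp
qed

lemma lower_restrict:
  fixes f g :: "real \<Rightarrow> real"
  assumes int: "set_integrable lborel {0..} f" and R: "R \<ge> 0" and g: "continuous_on {0..R} g"
    and fnn: "\<And>x. x \<ge> 0 \<Longrightarrow> f x \<ge> 0" and gf: "\<And>x. 0 \<le> x \<Longrightarrow> x \<le> R \<Longrightarrow> g x \<le> f x"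
  shows "(LBINT x:{0..R}. g x) \<le> (LBINT x:{0..}. f x)"
proof -
  have intR: "set_integrable lborel {0..R} f" by (rule set_integrable_subset[OF int]) auto
  have "(LBINT x:{0..R}. g x) \<le> (LBINT x:{0..R}. f x)"
    by (rule set_integral_mono[OF borel_integrable_atLeastAtMost'[OF g] intR]) (use gf in auto)
  also have "\<dots> \<le> (LBINT x:{0..}. f x)"
    unfolding set_lebesgue_integral_def
    using intR int unfolding set_integrable_def
    by (intro integral_mono) (auto simp: indicator_def fnn)
  finally show ?thesis .
qed

lemma int_const_Icc: "t \<ge> 0 \<Longrightarrow> (LBINT x:{0..t}. (c::real)) = t * c"
  by (subst set_integral_const) auto

lemma int_inv_Icc: assumes R: "(R::real) \<ge> 0" shows "(LBINT x:{0..R}. 1/(1+x)) = ln (1+R)"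
proof -
  have "(LBINT x=ereal 0..ereal R. 1/(1+x)) = ln (1+R) - ln (1+0)"
  proof (rule interval_integral_FTC_finite)
    show "continuous_on {min 0 R..max 0 R} (\<lambda>x::real. 1/(1+x))"
      using R by (intro continuous_intros) auto
    fix x :: real assume "min 0 R \<le> x" "x \<le> max 0 R"
    hence x: "x \<ge> 0" using R by auto
    have "((\<lambda>x. ln (1+x)) has_real_derivative 1/(1+x)) (at x)"
      using x by (auto intro!: derivative_eq_intros)
    thus "((\<lambda>x. ln (1+x)) has_vector_derivative 1/(1+x)) (at x within {min 0 R..max 0 R})"
      by (simp add: has_real_derivative_iff_has_vector_derivative has_vector_derivative_at_within)
  qed
  thus ?thesis using interval_integral_Icc[of 0 R "\<lambda>x. 1/(1+x)"] R by simp
qed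

lemma sub_int_mono:
  fixes g :: "real \<Rightarrow> real"
  assumes int: "set_integrable lborel B g" and AB: "A \<subseteq> B" and A: "A \<in> sets lborel"
    and nn: "\<And>x. x \<in> B \<Longrightarrow> g x \<ge> 0"
  shows "(LBINT x:A. g x) \<le> (LBINT x:B. g x)"
proof -
  have intA: "set_integrable lborel A g" by (rule set_integrable_subset[OF int A AB])
  show ?thesis
    unfolding set_lebesgue_integral_def
    using intA int AB unfolding set_integrable_def
    by (intro integral_mono) (auto simp: indicator_def nn)
qed

lemma int_inv_sq_shift:
  fixes t :: real assumes t: "t > 0"
  shows "set_integrable lborel {0..} (\<lambda>x. 1/(t+x)^2)" "(LBINT x:{0..}. 1/(t+x)^2) \<le> 2/t"
proof -
  note R = interval_integral_FTC_nonneg[where a="ereal (-t/2)" and b=\<infinity> and F="\<lambda>x. - 1/(t+x)"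
     and f="\<lambda>x. 1/(t+x)^2" and A="-2/t" and B=0]
  have p1: "ereal (-t/2) < \<infinity>" by simp
  have p2: "DERIV (\<lambda>x. - 1/(t+x)) x :> 1/(t+x)^2" if "ereal (-t/2) < ereal x" for x
  proof -
    have x: "t + x > 0" using that t by simp
    show ?thesis using x by (auto intro!: derivative_eq_intros simp: power2_eq_square)
  qed
  have p3: "isCont (\<lambda>x. 1/(t+x)^2) x" if "ereal (-t/2) < ereal x" for x
  proof -
    have x: "t + x > 0" using that t by simp
    show ?thesis using x by (intro continuous_intros) auto
  qed
  have p4: "AE x in lborel. ereal (-t/2) < ereal x \<longrightarrow> ereal x < \<infinity> \<longrightarrow> 0 \<le> 1/(t+x)^2"
    by (intro AE_I2) simp
  have "((\<lambda>x. - 1/(t+x)) \<longlongrightarrow> - 1/(t + (-t/2))) (at_right (-t/2))"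
    using t by (intro tendsto_intros) auto
  hence p5: "(((\<lambda>x. - 1/(t+x)) \<circ> real_of_ereal) \<longlongrightarrow> -2/t) (at_right (ereal (-t/2)))"
    unfolding ereal_tendsto_simps by simp
  have "filterlim (\<lambda>x. t + x) at_top at_top"
    by (rule filterlim_tendsto_add_at_top[OF tendsto_const filterlim_ident])
  hence "((\<lambda>x. - 1/(t+x)) \<longlongrightarrow> 0) at_top"
    by (intro tendsto_divide_0[OF tendsto_const] filterlim_at_top_imp_at_infinity)
  hence p6: "(((\<lambda>x. - 1/(t+x)) \<circ> real_of_ereal) \<longlongrightarrow> 0) (at_left \<infinity>)"
    unfolding ereal_tendsto_simps .
  have e: "einterval (ereal (-t/2)) \<infinity> = {-t/2<..}" by (rule einterval_eq_Ici)
  have I: "set_integrable lborel {-t/2<..} (\<lambda>x. 1/(t+x)^2)"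
    using R(1)[OF p1 p2 p3 p4 p5 p6] unfolding e .
  have V: "(LBINT x:{-t/2<..}. 1/(t+x)^2) = 2/t"
    using R(2)[OF p1 p2 p3 p4 p5 p6] unfolding interval_integral_to_infinity_eq by simp
  show "set_integrable lborel {0..} (\<lambda>x. 1/(t+x)^2)"
    by (rule set_integrable_subset[OF I]) (use t in auto)
  have "(LBINT x:{0..}. 1/(t+x)^2) \<le> (LBINT x:{-t/2<..}. 1/(t+x)^2)"
    by (rule sub_int_mono[OF I]) (use t in auto)
  thus "(LBINT x:{0..}. 1/(t+x)^2) \<le> 2/t" using V by simp
qed

lemma q_bound:
  fixes q s :: real assumes q: "q \<ge> 0" and s: "s > 0"
  shows "q powr s * (1 + q powr s)^2 * exp (-q) \<le> 2 * (s powr s + (3 * s) powr (3 * s))"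
proof -
  define u where "u = q powr s"
  have u0: "u \<ge> 0" unfolding u_def by simp
  have u2: "u^2 = q powr (2 * s)" unfolding u_def by (simp add: power2_eq_square powr_add[symmetric])
  have h1: "(1 + u)^2 = 1 + 2*u + u^2" "(1 - u)^2 = 1 - 2*u + u^2" by (simp_all add: power2_eq_square algebra_simps)
  have "0 \<le> (1 - u)^2" by simp
  hence "(1 + u)^2 \<le> 2 + 2 * u^2" using h1 by linarith
  hence "u * (1 + u)^2 * exp (-q) \<le> u * (2 + 2 * u^2) * exp (-q)"
    using u0 by (intro mult_right_mono mult_left_mono) auto
  also have "\<dots> = 2 * (q powr s * exp (- 1 * q)) + 2 * (q powr (3 * s) * exp (- 1 * q))"
    unfolding u2 unfolding u_def by (simp add: algebra_simps powr_add[symmetric])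
  also have "\<dots> \<le> 2 * ((s/1) powr s) + 2 * ((3 * s / 1) powr (3 * s))"
    using powr_exp_bound[of s 1 q] powr_exp_bound[of "3 * s" 1 q] q s by (intro add_mono mult_left_mono) auto
  finally show ?thesis unfolding u_def by simp
qed

lemma sint_lin2:
  fixes f g :: "real \<Rightarrow> real"
  assumes "set_integrable lborel A f" "set_integrable lborel A g"
  shows "set_integrable lborel A (\<lambda>x. c * f x - g x)"
    "(LBINT x:A. c * f x - g x) = c * (LBINT x:A. f x) - (LBINT x:A. g x)"
proof -
  have f: "set_integrable lborel A (\<lambda>x. c * f x)" using assms(1) by auto
  show "set_integrable lborel A (\<lambda>x. c * f x - g x)" using set_integral_diff(1)[OF f assms(2)] .
  show "(LBINT x:A. c * f x - g x) = c * (LBINT x:A. f x) - (LBINT x:A. g x)"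
    using set_integral_diff(2)[OF f assms(2)] by simp
qed

lemma sc_pointwise:
  fixes x h b c :: real
  assumes x: "x \<ge> 0" and h: "h > 0" and b: "b > 0"
  defines "xs \<equiv> max 0 (c - 1)"
  shows "(1 - c/(1+x)) * (exp (- h * xs powr b) - exp (- h * x powr b)) \<ge> 0"
    and "x > xs \<Longrightarrow> (1 - c/(1+x)) * (exp (- h * xs powr b) - exp (- h * x powr b)) > 0"
proof -
  have xs0: "xs \<ge> 0" unfolding xs_def by simp
  have d: "1 + x > 0" using x by simp
  {
    assume xx: "x \<ge> xs"
    have u: "1 - c/(1+x) \<ge> 0" using xx d unfolding xs_def by (simp add: field_simps)
    have "xs powr b \<le> x powr b" using xx xs0 b by (intro powr_mono2) auto
    hence "exp (- h * x powr b) \<le> exp (- h * xs powr b)" using h by simp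
    hence "(1 - c/(1+x)) * (exp (- h * xs powr b) - exp (- h * x powr b)) \<ge> 0" using u by simp
  }
  moreover {
    assume xx: "x < xs"
    hence xs': "xs = c - 1" unfolding xs_def using x by auto
    have u: "1 - c/(1+x) < 0" using xx d xs' by (simp add: field_simps)
    have "x powr b \<le> xs powr b" using xx x b by (intro powr_mono2) auto
    hence "exp (- h * x powr b) \<ge> exp (- h * xs powr b)" using h by simp
    hence "(1 - c/(1+x)) * (exp (- h * xs powr b) - exp (- h * x powr b)) \<ge> 0" using u
      by (simp add: mult_nonpos_nonpos)
  }
  ultimately show "(1 - c/(1+x)) * (exp (- h * xs powr b) - exp (- h * x powr b)) \<ge> 0" by linarith
  assume xx: "x > xs"
  have u: "1 - c/(1+x) > 0" using xx d unfolding xs_def by (simp add: field_simps)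
  have "xs powr b < x powr b" using xx xs0 b by (intro powr_less_mono2) auto
  hence "exp (- h * x powr b) < exp (- h * xs powr b)" using h by simp
  thus "(1 - c/(1+x)) * (exp (- h * xs powr b) - exp (- h * x powr b)) > 0" using u by simp
qed

lemma exp_sub_ineq: "exp (- S' * p) \<ge> exp (- S * p) * (1 - (S' - S) * (p::real))"
proof -
  have "exp (- S' * p) = exp (- S * p) * exp (- ((S' - S) * p))"
    by (simp add: exp_add[symmetric] algebra_simps)
  also have "\<dots> \<ge> exp (- S * p) * (1 - (S' - S) * p)"
    using exp_ge_add_one_self[of "- ((S' - S) * p)"] by (intro mult_left_mono) auto
  finally show ?thesis .
qed

context fixes \<alpha> :: real assumes a2: "\<alpha> > 2"
begin

lemma bt_pos: "0 < 2/\<alpha>" and bt_lt1: "2/\<alpha> < 1"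
  using a2 by auto

lemma p_cont: "continuous_on {0..} (\<lambda>x::real. x powr (2/\<alpha>))"
  using bt_pos by (intro continuous_on_powr') (auto intro: continuous_intros)

lemma p_inv: "x \<ge> 0 \<Longrightarrow> (x powr (2/\<alpha>)) powr (\<alpha>/2) = x"
  using a2 by (simp add: powr_powr)

lemma p_nonneg: "0 \<le> x powr (2/\<alpha>)" by simp

lemma int0: assumes "S > 0"
  shows "set_integrable lborel {0..} (\<lambda>x. exp (- S * x powr (2/\<alpha>)) / (1+x))"
proof (rule set_integrable_dom)
  show "continuous_on {0..} (\<lambda>x. exp (- S * x powr (2/\<alpha>)) / (1+x))"
    by (intro continuous_intros p_cont) auto
  fix x :: real assume x: "x \<ge> 0"
  let ?p = "x powr (2/\<alpha>)"
  let ?e = "exp (- S * ?p)"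
  have "\<bar>?e / (1+x)\<bar> * (1+x^2) = ?e / (1+x) * (1+x^2)" using x by simp
  also have "\<dots> \<le> (1+x) * ?e" by (rule ratio_le) (use x in auto)
  also have "\<dots> = ?e + ?p powr (\<alpha>/2) * ?e" using x p_inv by (simp add: algebra_simps)
  also have "\<dots> \<le> 1 + ((\<alpha>/2)/S) powr (\<alpha>/2)"
    using powr_exp_bound[of "\<alpha>/2" S ?p] a2 assms by (intro add_mono) auto
  finally show "\<bar>?e / (1+x)\<bar> * (1+x^2) \<le> 1 + ((\<alpha>/2)/S) powr (\<alpha>/2)" .
qed

lemma int1: assumes "S > 0"
  shows "set_integrable lborel {0..} (\<lambda>x. x powr (2/\<alpha>) * exp (- S * x powr (2/\<alpha>)) / (1+x))"
proof (rule set_integrable_dom)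
  show "continuous_on {0..} (\<lambda>x. x powr (2/\<alpha>) * exp (- S * x powr (2/\<alpha>)) / (1+x))"
    by (intro continuous_intros p_cont) auto
  fix x :: real assume x: "x \<ge> 0"
  let ?p = "x powr (2/\<alpha>)"
  let ?e = "exp (- S * ?p)"
  have "\<bar>?p * ?e / (1+x)\<bar> * (1+x^2) = ?p * ?e / (1+x) * (1+x^2)" using x by simp
  also have "\<dots> \<le> (1+x) * (?p * ?e)" by (rule ratio_le) (use x in auto)
  also have "\<dots> = ?p powr 1 * ?e + ?p powr (\<alpha>/2 + 1) * ?e" using x p_inv
    by (simp add: algebra_simps powr_add)
  also have "\<dots> \<le> (1/S) powr 1 + ((\<alpha>/2+1)/S) powr (\<alpha>/2+1)"
    using powr_exp_bound[of "\<alpha>/2+1" S ?p] powr_exp_bound[of 1 S ?p] a2 assms by (intro add_mono) auto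
  finally show "\<bar>?p * ?e / (1+x)\<bar> * (1+x^2) \<le> (1/S) powr 1 + ((\<alpha>/2+1)/S) powr (\<alpha>/2+1)" .
qed

lemma intC: assumes "S \<ge> 0"
  shows "set_integrable lborel {0..} (\<lambda>x. exp (- S * x powr (2/\<alpha>)) / (1+x)^2)"
proof (rule set_integrable_dom)
  show "continuous_on {0..} (\<lambda>x. exp (- S * x powr (2/\<alpha>)) / (1+x)^2)"
    by (intro continuous_intros p_cont) auto
  fix x :: real assume x: "x \<ge> 0"
  let ?e = "exp (- S * x powr (2/\<alpha>))"
  have "?e \<le> 1" using assms x by simp
  moreover have "1 + x^2 \<le> (1+x)^2" using x by (simp add: power2_eq_square algebra_simps)
  ultimately have "?e * (1 + x^2) \<le> 1 * (1+x)^2" by (intro mult_mono) auto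
  thus "\<bar>?e / (1+x)^2\<bar> * (1+x^2) \<le> 1" using x by (simp add: field_simps)
qed

lemma intC1: assumes "S > 0"
  shows "set_integrable lborel {0..} (\<lambda>x. x powr (2/\<alpha>) * exp (- S * x powr (2/\<alpha>)) / (1+x)^2)"
proof (rule set_integrable_bound[OF int1[OF assms]])
  show "set_borel_measurable lborel {0..} (\<lambda>x. x powr (2/\<alpha>) * exp (- S * x powr (2/\<alpha>)) / (1+x)^2)"
    using set_measurable_continuous_on[of "{0..}" "(\<lambda>x. x powr (2/\<alpha>) * exp (- S * x powr (2/\<alpha>)) / (1+x)^2)"]
    unfolding set_borel_measurable_def by (simp add: continuous_intros p_cont)
  show "AE x in lborel. x \<in> {0..} \<longrightarrow> norm (x powr (2/\<alpha>) * exp (- S * x powr (2/\<alpha>)) / (1+x)^2)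
     \<le> norm (x powr (2/\<alpha>) * exp (- S * x powr (2/\<alpha>)) / (1+x))"
    by (intro AE_I2 impI) (auto intro!: sq_div_le)
qed

lemma kA_pos: "S > 0 \<Longrightarrow> vrag_kernel \<alpha> S > 0"
  unfolding vrag_kernel_def
  by (rule set_integral_pos_tail[OF int0, of S 0]) auto

lemma kB_pos: "S > 0 \<Longrightarrow> kB \<alpha> S > 0"
  unfolding kB_def
  by (rule set_integral_pos_tail[OF int1, of S 0]) auto

lemma kC_pos: "S \<ge> 0 \<Longrightarrow> kC \<alpha> S > 0"
  unfolding kC_def
  by (rule set_integral_pos_tail[OF intC, of S 0]) auto

lemma kC1_le: "S > 0 \<Longrightarrow> kC1 \<alpha> S \<le> kB \<alpha> S"
  unfolding kC1_def kB_def
  by (rule set_integral_mono[OF intC1 int1]) (auto intro!: sq_div_le)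

lemma kA_sub: "S > 0 \<Longrightarrow> S' > 0 \<Longrightarrow> vrag_kernel \<alpha> S' \<ge> vrag_kernel \<alpha> S - (S' - S) * kB \<alpha> S"
proof -
  assume S: "S > 0" and S': "S' > 0"
  have "vrag_kernel \<alpha> S - (S' - S) * kB \<alpha> S =
    (LBINT x:{0..}. exp (- S * x powr (2/\<alpha>)) / (1+x) - (S' - S) * (x powr (2/\<alpha>) * exp (- S * x powr (2/\<alpha>)) / (1+x)))"
    unfolding vrag_kernel_def kB_def
    by (rule sint_lin(2)[symmetric, OF int0[OF S] int1[OF S]])
  also have "\<dots> \<le> vrag_kernel \<alpha> S'"
    unfolding vrag_kernel_def
  proof (rule set_integral_mono)
    show "set_integrable lborel {0..} (\<lambda>x. exp (- S * x powr (2/\<alpha>)) / (1+x) - (S' - S) * (x powr (2/\<alpha>) * exp (- S * x powr (2/\<alpha>)) / (1+x)))"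
      by (rule sint_lin(1)[OF int0[OF S] int1[OF S]])
    show "set_integrable lborel {0..} (\<lambda>x. exp (- S' * x powr (2/\<alpha>)) / (1+x))" by (rule int0[OF S'])
    fix x :: real assume "x \<in> {0..}"
    hence x: "x \<ge> 0" by auto
    show "exp (- S * x powr (2/\<alpha>)) / (1+x) - (S' - S) * (x powr (2/\<alpha>) * exp (- S * x powr (2/\<alpha>)) / (1+x))
        \<le> exp (- S' * x powr (2/\<alpha>)) / (1+x)"
      using x by (intro pt_ineq exp_sub_ineq) auto
  qed
  finally show ?thesis .
qed

lemma kC_sub: "S > 0 \<Longrightarrow> S' \<ge> 0 \<Longrightarrow> kC \<alpha> S' \<ge> kC \<alpha> S - (S' - S) * kC1 \<alpha> S"
proof -
  assume S: "S > 0" and S': "S' \<ge> 0"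
  have "kC \<alpha> S - (S' - S) * kC1 \<alpha> S =
    (LBINT x:{0..}. exp (- S * x powr (2/\<alpha>)) / (1+x)^2 - (S' - S) * (x powr (2/\<alpha>) * exp (- S * x powr (2/\<alpha>)) / (1+x)^2))"
    unfolding kC_def kC1_def
    by (rule sint_lin(2)[symmetric, OF intC intC1[OF S]]) (use S in auto)
  also have "\<dots> \<le> kC \<alpha> S'"
    unfolding kC_def
  proof (rule set_integral_mono)
    show "set_integrable lborel {0..} (\<lambda>x. exp (- S * x powr (2/\<alpha>)) / (1+x)^2 - (S' - S) * (x powr (2/\<alpha>) * exp (- S * x powr (2/\<alpha>)) / (1+x)^2))"
      by (rule sint_lin(1)[OF intC intC1[OF S]]) (use S in auto)
    show "set_integrable lborel {0..} (\<lambda>x. exp (- S' * x powr (2/\<alpha>)) / (1+x)^2)" by (rule intC[OF S'])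
    fix x :: real assume "x \<in> {0..}"
    hence x: "x \<ge> 0" by auto
    show "exp (- S * x powr (2/\<alpha>)) / (1+x)^2 - (S' - S) * (x powr (2/\<alpha>) * exp (- S * x powr (2/\<alpha>)) / (1+x)^2)
        \<le> exp (- S' * x powr (2/\<alpha>)) / (1+x)^2"
      using x by (intro pt_ineq exp_sub_ineq) auto
  qed
  finally show ?thesis .
qed

lemma kA_mono: "0 < S \<Longrightarrow> S \<le> S' \<Longrightarrow> vrag_kernel \<alpha> S' \<le> vrag_kernel \<alpha> S"
  unfolding vrag_kernel_def
  by (rule set_integral_mono[OF int0 int0]) (auto intro!: divide_right_mono mult_right_mono)

lemma kB_mono: "0 < S \<Longrightarrow> S \<le> S' \<Longrightarrow> kB \<alpha> S' \<le> kB \<alpha> S"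
  unfolding kB_def
  by (rule set_integral_mono[OF int1 int1]) (auto intro!: divide_right_mono mult_left_mono mult_right_mono)

lemma kC_mono: "0 \<le> S \<Longrightarrow> S \<le> S' \<Longrightarrow> kC \<alpha> S' \<le> kC \<alpha> S"
  unfolding kC_def
  by (rule set_integral_mono[OF intC intC]) (auto intro!: divide_right_mono mult_right_mono)

lemma F_deriv:
  assumes x: "x > 0"
  shows "((\<lambda>x. x/(1+x) * exp (- S * x powr (2/\<alpha>))) has_real_derivative
     (exp (- S * x powr (2/\<alpha>)) / (1+x)^2 - (S*(2/\<alpha>)) * (x powr (2/\<alpha>) * exp (- S * x powr (2/\<alpha>)) / (1+x)))) (at x)"
proof -
  have e: "x powr (2/\<alpha> - 1) = x powr (2/\<alpha>) / x" using x by (simp add: powr_diff)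
  have d: "((\<lambda>x. x powr (2/\<alpha>)) has_real_derivative (2/\<alpha>) * (x powr (2/\<alpha>) / x)) (at x)"
    using has_real_derivative_powr[OF x, of "2/\<alpha>"] unfolding e .
  show ?thesis
    apply (rule d derivative_eq_intros refl | use x in force)+
    using x a2 by (simp add: field_simps power2_eq_square add_pos_pos aux_cancel)
qed

lemma ident:
  assumes S: "S > 0"
  shows "kC \<alpha> S = S * (2/\<alpha>) * kB \<alpha> S"
proof -
  let ?F = "\<lambda>x. x/(1+x) * exp (- S * x powr (2/\<alpha>))"
  let ?f = "\<lambda>x. exp (- S * x powr (2/\<alpha>)) / (1+x)^2 - (S*(2/\<alpha>)) * (x powr (2/\<alpha>) * exp (- S * x powr (2/\<alpha>)) / (1+x))"
  have intf: "set_integrable lborel {0..} ?f"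
    by (rule sint_lin(1)[OF intC int1[OF S]]) (use S in auto)
  have contf: "continuous_on {0..} ?f"
    by (intro continuous_intros p_cont) auto
  have contF: "continuous_on {0..} ?F"
    by (intro continuous_intros p_cont) auto
  have FTC: "(LBINT x=0..\<infinity>. ?f x) = 0 - 0"
  proof (rule interval_integral_FTC_integrable)
    show "(0::ereal) < \<infinity>" by simp
  next
    fix x :: real assume "0 < ereal x"
    hence x: "x > 0" by simp
    show "(?F has_vector_derivative ?f x) (at x)"
      using F_deriv[OF x, of S] unfolding has_real_derivative_iff_has_vector_derivative .
    have "continuous_on {0<..} ?f" using contf by (rule continuous_on_subset) auto
    thus "isCont ?f x" using x continuous_on_eq_continuous_at[of "{0<..}" ?f] by auto
  next
    show "set_integrable lborel (einterval 0 \<infinity>) ?f"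
    proof -
      have e: "einterval 0 \<infinity> = {0::real<..}" using einterval_eq_Ici[of 0] by (simp add: zero_ereal_def)
      show ?thesis unfolding e by (rule set_integrable_subset[OF intf]) auto
    qed
  next
    have z: "(0::real) \<in> {0..}" by simp
    have "(?F \<longlongrightarrow> ?F 0) (at 0 within {0..})"
      using contF[unfolded continuous_on_def, rule_format, OF z] .
    hence "(?F \<longlongrightarrow> ?F 0) (at 0 within {0<..})"
      by (rule tendsto_within_subset) auto
    hence "(?F \<longlongrightarrow> 0) (at_right 0)" by simp
    thus "((?F \<circ> real_of_ereal) \<longlongrightarrow> 0) (at_right 0)"
      by (simp add: zero_ereal_def ereal_tendsto_simps)
  next
    define K where "K = ((\<alpha>/2)/S) powr (\<alpha>/2)"
    have bnd: "\<forall>\<^sub>F x in at_top. norm (?F x) \<le> K / x"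
      using eventually_gt_at_top[of 0]
    proof eventually_elim
      case (elim x)
      let ?p = "x powr (2/\<alpha>)"
      have "x * exp (- S * ?p) = ?p powr (\<alpha>/2) * exp (- S * ?p)" using elim p_inv by simp
      also have "\<dots> \<le> K" unfolding K_def using powr_exp_bound[of "\<alpha>/2" S ?p] a2 S by auto
      finally have 1: "exp (- S * ?p) \<le> K / x" using elim by (simp add: field_simps)
      have "norm (?F x) = x/(1+x) * exp (- S * ?p)" using elim by simp
      also have "\<dots> \<le> 1 * exp (- S * ?p)" using elim by (intro mult_right_mono) auto
      finally show ?case using 1 by simp
    qed
    have "((\<lambda>x. K / x) \<longlongrightarrow> 0) at_top"
      by (intro tendsto_divide_0[OF tendsto_const] filterlim_at_top_imp_at_infinity filterlim_ident)
    hence "(?F \<longlongrightarrow> 0) at_top" by (rule Lim_null_comparison[OF bnd])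
    thus "((?F \<circ> real_of_ereal) \<longlongrightarrow> 0) (at_left \<infinity>)"
      by (simp add: ereal_tendsto_simps)
  qed
  have "(LBINT x=0..\<infinity>. ?f x) = (LBINT x:{0<..}. ?f x)"
    by (rule interval_lebesgue_integral_0_infty(2))
  also have "\<dots> = (LBINT x:{0..}. ?f x)"
  proof (rule set_integral_cong_set)
    show "set_borel_measurable lborel {0<..} ?f" "set_borel_measurable lborel {0..} ?f"
      using set_measurable_continuous_on[of "{0<..}" ?f] set_measurable_continuous_on[of "{0..}" ?f] contf
        continuous_on_subset[OF contf, of "{0<..}"]
      unfolding set_borel_measurable_def by auto
    show "AE x in lborel. ((x::real) \<in> {0..}) = (x \<in> {0<..})"
      by (rule ae_0)
  qed
  also have "\<dots> = kC \<alpha> S - (S*(2/\<alpha>)) * kB \<alpha> S"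
    unfolding kC_def kB_def by (rule sint_lin(2)[OF intC int1[OF S]]) (use S in auto)
  finally show ?thesis using FTC by simp
qed

lemma kC_cont: assumes S: "S > 0" shows "isCont (kC \<alpha>) S"
proof (rule isCont_from_lip[of "S/2"])
  show "S/2 > 0" using S by simp
  fix h :: real assume h: "\<bar>h\<bar> < S/2"
  have S': "S + h > 0" "S/2 \<le> S + h" using h S by auto
  show "\<bar>kC \<alpha> (S+h) - kC \<alpha> S\<bar> \<le> \<bar>h\<bar> * kB \<alpha> (S/2)"
  proof (cases "h \<ge> 0")
    case True
    have 1: "kC \<alpha> (S+h) \<ge> kC \<alpha> S - h * kC1 \<alpha> S" using kC_sub[OF S, of "S+h"] S' by simp
    have 2: "kC \<alpha> (S+h) \<le> kC \<alpha> S" using kC_mono[of S "S+h"] S True by simp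
    have 3: "h * kC1 \<alpha> S \<le> h * kB \<alpha> (S/2)"
      using kC1_le[OF S] kB_mono[of "S/2" S] S True by (intro mult_left_mono) auto
    have "kC \<alpha> S - kC \<alpha> (S+h) \<le> h * kB \<alpha> (S/2)" using 1 3 by linarith
    thus ?thesis using 2 True by (simp add: abs_if)
  next
    case False
    have 1: "kC \<alpha> S \<ge> kC \<alpha> (S+h) - (-h) * kC1 \<alpha> (S+h)" using kC_sub[OF S'(1), of S] S by simp
    have 2: "kC \<alpha> S \<le> kC \<alpha> (S+h)" using kC_mono[of "S+h" S] S' False by simp
    have 3: "(-h) * kC1 \<alpha> (S+h) \<le> (-h) * kB \<alpha> (S/2)"
      using kC1_le[OF S'(1)] kB_mono[of "S/2" "S+h"] S S' False by (intro mult_left_mono) auto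
    have "kC \<alpha> (S+h) - kC \<alpha> S \<le> (-h) * kB \<alpha> (S/2)" using 1 3 by linarith
    thus ?thesis using 2 False by (simp add: abs_if)
  qed
qed

lemma kB_eq: "S > 0 \<Longrightarrow> kB \<alpha> S = kC \<alpha> S / (S * (2/\<alpha>))"
  using ident[of S] a2 by (simp add: field_simps)

lemma kB_cont: assumes S: "S > 0" shows "isCont (kB \<alpha>) S"
proof -
  have c: "isCont (\<lambda>S. kC \<alpha> S / (S * (2/\<alpha>))) S"
    using kC_cont[OF S] S a2 by (intro continuous_intros) auto
  have ev: "\<forall>\<^sub>F S' in nhds S. kB \<alpha> S' = kC \<alpha> S' / (S' * (2/\<alpha>))"
    by (rule eventually_mono[OF eventually_nhds_in_open[of "{0<..}" S]]) (use S kB_eq in auto)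
  show ?thesis using isCont_cong[OF ev] c by simp
qed

lemma kA_deriv: assumes S: "S > 0" shows "DERIV (vrag_kernel \<alpha>) S :> - kB \<alpha> S"
proof -
  have ev: "\<forall>\<^sub>F h in at 0. norm ((vrag_kernel \<alpha> (S+h) - vrag_kernel \<alpha> S)/h - (- kB \<alpha> S))
       \<le> \<bar>kB \<alpha> (S+h) - kB \<alpha> S\<bar>"
  proof -
   have B: "norm ((vrag_kernel \<alpha> (S+h) - vrag_kernel \<alpha> S)/h - (- kB \<alpha> S))
       \<le> \<bar>kB \<alpha> (S+h) - kB \<alpha> S\<bar>" if h: "h \<noteq> 0" "\<bar>h\<bar> < S" for h
   proof -
    have Sh: "S + h > 0" using h by auto
    have 1: "vrag_kernel \<alpha> (S+h) - vrag_kernel \<alpha> S \<ge> - h * kB \<alpha> S"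
      using kA_sub[OF S Sh] by simp
    have 2: "vrag_kernel \<alpha> (S+h) - vrag_kernel \<alpha> S \<le> - h * kB \<alpha> (S+h)"
      using kA_sub[OF Sh S] by simp
    define \<Delta> where "\<Delta> = vrag_kernel \<alpha> (S+h) - vrag_kernel \<alpha> S + h * kB \<alpha> S"
    have d0: "\<Delta> \<ge> 0" using 1 by (simp add: \<Delta>_def)
    have "\<Delta> \<le> h * (kB \<alpha> S - kB \<alpha> (S+h))" using 2 by (simp add: \<Delta>_def algebra_simps)
    also have "\<dots> \<le> \<bar>h\<bar> * \<bar>kB \<alpha> (S+h) - kB \<alpha> S\<bar>"
      by (metis abs_ge_self abs_minus_commute abs_mult)
    finally have "\<bar>\<Delta>\<bar> \<le> \<bar>h\<bar> * \<bar>kB \<alpha> (S+h) - kB \<alpha> S\<bar>" using d0 by simp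
    moreover have "(vrag_kernel \<alpha> (S+h) - vrag_kernel \<alpha> S)/h - (- kB \<alpha> S) = \<Delta> / h"
      using h unfolding \<Delta>_def by (simp add: field_simps)
    ultimately show ?thesis
      using h by (simp add: abs_divide divide_le_eq mult.commute)
   qed
   show ?thesis unfolding eventually_at using S B by (auto simp: dist_real_def intro!: exI[of _ S])
  qed
  have "((\<lambda>h. kB \<alpha> (S+h) - kB \<alpha> S) \<longlongrightarrow> 0) (at 0)"
    using kB_cont[OF S] unfolding isCont_iff LIM_zero_iff .
  hence "((\<lambda>h. \<bar>kB \<alpha> (S+h) - kB \<alpha> S\<bar>) \<longlongrightarrow> 0) (at 0)"
    by (rule tendsto_rabs_zero)
  hence "((\<lambda>h. (vrag_kernel \<alpha> (S+h) - vrag_kernel \<alpha> S)/h - (- kB \<alpha> S)) \<longlongrightarrow> 0) (at 0)"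
    by (rule Lim_null_comparison[OF ev])
  thus ?thesis unfolding DERIV_def LIM_zero_iff .
qed

lemma kK_eq: assumes S: "S > 0"
  shows "kK \<alpha> S c = (LBINT x:{0..}. exp (- S * x powr (2/\<alpha>))/(1+x) - c * (exp (- S * x powr (2/\<alpha>))/(1+x)^2))"
    and "set_integrable lborel {0..} (\<lambda>x. exp (- S * x powr (2/\<alpha>))/(1+x) - c * (exp (- S * x powr (2/\<alpha>))/(1+x)^2))"
  unfolding kK_def vrag_kernel_def kC_def
   apply (rule sint_lin(2)[symmetric, OF int0[OF S] intC[OF less_imp_le[OF S]]])
  apply (rule sint_lin(1)[OF int0[OF S] intC[OF less_imp_le[OF S]]])
  done

lemma pw_ident:
  fixes x S0 h p c E :: real
  assumes x: "x \<ge> 0"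
  shows "E * (exp (- S0 * p)/(1+x) - c * (exp (- S0 * p)/(1+x)^2))
       - (exp (- (S0+h) * p)/(1+x) - c * (exp (- (S0+h) * p)/(1+x)^2))
       = exp (- S0 * p)/(1+x) * ((1 - c/(1+x)) * (E - exp (- h * p)))"
proof -
  have ew: "exp (- (S0+h) * p) = exp (- S0 * p) * exp (- h * p)"
    by (simp add: exp_add[symmetric] algebra_simps)
  have d: "1 + x \<noteq> 0" using x by simp
  have gen: "E*(e0/d - c*(e0/d^2)) - (e0*w/d - c*(e0*w/d^2)) = e0/d*((1-c/d)*(E-w))"
    if "d \<noteq> 0" for d e0 w :: real using that by (simp add: field_simps power2_eq_square)
  show ?thesis unfolding ew using gen[OF d] by simp
qed

lemma GK: assumes S0: "S0 > 0" and h: "h > 0"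
  shows "\<exists>E>0. kK \<alpha> (S0+h) c < E * kK \<alpha> S0 c"
proof -
  define xs where "xs = max 0 (c-1)"
  define E where "E = exp (- h * xs powr (2/\<alpha>))"
  have S1: "S0 + h > 0" using S0 h by simp
  let ?f0 = "\<lambda>x. exp (- S0 * x powr (2/\<alpha>))/(1+x) - c * (exp (- S0 * x powr (2/\<alpha>))/(1+x)^2)"
  let ?f1 = "\<lambda>x. exp (- (S0+h) * x powr (2/\<alpha>))/(1+x) - c * (exp (- (S0+h) * x powr (2/\<alpha>))/(1+x)^2)"
  have "E * kK \<alpha> S0 c - kK \<alpha> (S0+h) c = (LBINT x:{0..}. E * ?f0 x - ?f1 x)"
    unfolding kK_eq(1)[OF S0] kK_eq(1)[OF S1]
    by (rule sint_lin2(2)[symmetric, OF kK_eq(2)[OF S0] kK_eq(2)[OF S1]])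
  also have "\<dots> > 0"
  proof (rule set_integral_pos_tail[OF sint_lin2(1)[where c=E, OF kK_eq(2)[OF S0] kK_eq(2)[OF S1]], where c=xs])
    show "xs \<ge> 0" unfolding xs_def by simp
  next
    fix x :: real assume x: "x \<ge> 0"
    have pos: "exp (- S0 * x powr (2/\<alpha>))/(1+x) > 0" using x by simp
    show "E * ?f0 x - ?f1 x \<ge> 0"
      unfolding pw_ident[OF x] E_def xs_def
      using mult_nonneg_nonneg[OF less_imp_le[OF pos] sc_pointwise(1)[OF x h bt_pos, of c]] .
  next
    fix x :: real assume xx: "x > xs"
    hence x: "x \<ge> 0" unfolding xs_def by simp
    have pos: "exp (- S0 * x powr (2/\<alpha>))/(1+x) > 0" using x by simp
    have xx': "x > max 0 (c-1)" using xx unfolding xs_def .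
    show "E * ?f0 x - ?f1 x > 0"
      unfolding pw_ident[OF x] E_def xs_def
      using mult_pos_pos[OF pos sc_pointwise(2)[OF x h bt_pos xx']] .
  qed
  finally show ?thesis by (intro exI[of _ E]) (auto simp: E_def)
qed

lemma Dv_kK: assumes "a + l > 0" shows "Dv \<alpha> a l = kK \<alpha> (a+l) ((\<alpha>/2) * (l/(a+l)))"
  unfolding Dv_def kK_def using kB_eq[OF assms] assms a2 by (simp add: field_simps)

lemma SC: assumes a: "a \<ge> 0" and l0: "0 < l0" "l0 < l" and D0: "Dv \<alpha> a l0 \<le> 0"
  shows "Dv \<alpha> a l < 0"
proof -
  have S0: "a + l0 > 0" using a l0 by simp
  have S: "a + l > 0" using a l0 by simp
  obtain E where E: "E > 0" "kK \<alpha> ((a+l0) + (l-l0)) ((\<alpha>/2) * (l/(a+l))) < E * kK \<alpha> (a+l0) ((\<alpha>/2) * (l/(a+l)))"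
    using GK[OF S0, of "l - l0" "(\<alpha>/2) * (l/(a+l))"] l0 by auto
  have "l0/(a+l0) \<le> l/(a+l)" using a l0 S0 S by (simp add: field_simps mult_left_mono)
  hence cc: "(\<alpha>/2) * (l0/(a+l0)) \<le> (\<alpha>/2) * (l/(a+l))" using a2 by (intro mult_left_mono) auto
  have "kK \<alpha> (a+l0) ((\<alpha>/2) * (l/(a+l))) \<le> kK \<alpha> (a+l0) ((\<alpha>/2) * (l0/(a+l0)))"
    unfolding kK_def using mult_right_mono[OF cc less_imp_le[OF kC_pos[of "a+l0"]]] S0 by linarith
  also have "\<dots> = Dv \<alpha> a l0" using Dv_kK[OF S0] by simp
  finally have "kK \<alpha> (a+l0) ((\<alpha>/2) * (l/(a+l))) \<le> 0" using D0 by simp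
  hence "E * kK \<alpha> (a+l0) ((\<alpha>/2) * (l/(a+l))) \<le> 0" using E(1) by (simp add: mult_nonneg_nonpos)
  with E(2) have "kK \<alpha> (a+l) ((\<alpha>/2) * (l/(a+l))) < 0" by simp
  thus ?thesis using Dv_kK[OF S] by simp
qed

lemma SC_sym: assumes l0: "0 < l0" "l0 < l" and D0: "Dv \<alpha> l0 l0 \<le> 0"
  shows "Dv \<alpha> l l < 0"
proof -
  have S0: "l0 + l0 > 0" using l0 by simp
  have S: "l + l > 0" using l0 by simp
  have c: "\<And>L. L > 0 \<Longrightarrow> (\<alpha>/2) * (L/(L+L)) = \<alpha>/4" by (simp add: field_simps)
  obtain E where E: "E > 0" "kK \<alpha> ((l0+l0) + 2*(l-l0)) (\<alpha>/4) < E * kK \<alpha> (l0+l0) (\<alpha>/4)"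
    using GK[OF S0, of "2*(l - l0)" "\<alpha>/4"] l0 by auto
  have "kK \<alpha> (l0+l0) (\<alpha>/4) \<le> 0" using Dv_kK[OF S0] c[of l0] l0 D0 by simp
  hence "E * kK \<alpha> (l0+l0) (\<alpha>/4) \<le> 0" using E(1) by (simp add: mult_nonneg_nonpos)
  moreover have "(l0+l0) + 2*(l-l0) = l + l" by simp
  ultimately have "kK \<alpha> (l+l) (\<alpha>/4) < 0" using E(2) by simp
  thus ?thesis using Dv_kK[OF S] c[of l] l0 by simp
qed

lemma Dv_int: assumes S: "a + l > 0"
  shows "(LBINT x:{0..}. (1 - l * x powr (2/\<alpha>)) / (1+x) * exp (- (a+l) * x powr (2/\<alpha>))) = Dv \<alpha> a l"
proof -
  have "(LBINT x:{0..}. (1 - l * x powr (2/\<alpha>)) / (1+x) * exp (- (a+l) * x powr (2/\<alpha>)))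
     = (LBINT x:{0..}. exp (- (a+l) * x powr (2/\<alpha>)) / (1+x) - l * (x powr (2/\<alpha>) * exp (- (a+l) * x powr (2/\<alpha>)) / (1+x)))"
    apply (rule set_lebesgue_integral_cong)
     apply simp
    apply (intro allI impI)
    apply (rule rearr)
    apply simp
    done
  also have "\<dots> = Dv \<alpha> a l"
    unfolding Dv_def vrag_kernel_def kB_def by (rule sint_lin(2)[OF int0[OF S] int1[OF S]])
  finally show ?thesis .
qed

lemma Dv_int_sym: assumes L: "L > 0"
  shows "(LBINT x:{0..}. (1 - L * x powr (2/\<alpha>)) / (1+x) * exp (- 2 * L * x powr (2/\<alpha>))) = Dv \<alpha> L L"
proof -
  have "(LBINT x:{0..}. (1 - L * x powr (2/\<alpha>)) / (1+x) * exp (- 2 * L * x powr (2/\<alpha>)))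
    = (LBINT x:{0..}. (1 - L * x powr (2/\<alpha>)) / (1+x) * exp (- (L+L) * x powr (2/\<alpha>)))"
    by (rule set_lebesgue_integral_cong) (auto simp: algebra_simps)
  also have "\<dots> = Dv \<alpha> L L" using Dv_int[of L L] L by simp
  finally show ?thesis .
qed

lemma kA_lower_log: assumes S: "S > 0" and R: "R \<ge> 0"
  shows "exp (- S * R powr (2/\<alpha>)) * ln (1+R) \<le> vrag_kernel \<alpha> S"
proof -
  have "(LBINT x:{0..R}. exp (- S * R powr (2/\<alpha>)) * (1/(1+x))) \<le> vrag_kernel \<alpha> S"
    unfolding vrag_kernel_def
  proof (rule lower_restrict[OF int0[OF S] R])
    show "continuous_on {0..R} (\<lambda>x. exp (- S * R powr (2/\<alpha>)) * (1/(1+x)))"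
      by (intro continuous_intros) auto
    fix x :: real assume x: "0 \<le> x" 
    show "0 \<le> exp (- S * x powr (2/\<alpha>)) / (1+x)" using x by simp
    assume xR: "x \<le> R"
    have "x powr (2/\<alpha>) \<le> R powr (2/\<alpha>)" using x xR bt_pos by (intro powr_mono2) auto
    hence "exp (- S * R powr (2/\<alpha>)) \<le> exp (- S * x powr (2/\<alpha>))" using S by simp
    thus "exp (- S * R powr (2/\<alpha>)) * (1/(1+x)) \<le> exp (- S * x powr (2/\<alpha>)) / (1+x)"
      using x by (simp add: divide_right_mono)
  qed
  moreover have "(LBINT x:{0..R}. exp (- S * R powr (2/\<alpha>)) * (1/(1+x))) = exp (- S * R powr (2/\<alpha>)) * (LBINT x:{0..R}. 1/(1+x))"
    by (rule set_integral_mult_right)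
  ultimately show ?thesis using int_inv_Icc[OF R] by simp
qed

lemma kA_lower_small: assumes S: "S > 0" and t1: "S powr (-\<alpha>/2) \<le> 1"
  shows "S powr (-\<alpha>/2) * (exp (-1) / 2) \<le> vrag_kernel \<alpha> S"
proof -
  let ?t = "S powr (-\<alpha>/2)"
  have t0: "?t \<ge> 0" by simp
  have "(LBINT x:{0..?t}. exp (-1) / 2) \<le> vrag_kernel \<alpha> S"
    unfolding vrag_kernel_def
  proof (rule lower_restrict[OF int0[OF S] t0])
    show "continuous_on {0..?t} (\<lambda>x. exp (-1) / 2)" by simp
    fix x :: real assume x: "0 \<le> x"
    show "0 \<le> exp (- S * x powr (2/\<alpha>)) / (1+x)" using x by simp
    assume xt: "x \<le> ?t"
    have "x powr (2/\<alpha>) \<le> ?t powr (2/\<alpha>)" using x xt bt_pos by (intro powr_mono2) auto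
    also have "?t powr (2/\<alpha>) = S powr (-1)" using a2 by (simp add: powr_powr)
    finally have "S * x powr (2/\<alpha>) \<le> S * S powr (-1)" using S by (intro mult_left_mono) auto
    also have "S * S powr (-1) = 1" using S by (simp add: powr_minus)
    finally have "exp (-1) \<le> exp (- S * x powr (2/\<alpha>))" by simp
    moreover have "1 + x \<le> 2" using xt t1 by simp
    ultimately show "exp (-1) / 2 \<le> exp (- S * x powr (2/\<alpha>)) / (1+x)"
      using x by (intro frac_le) auto
  qed
  thus ?thesis using int_const_Icc[OF t0] by simp
qed

lemma x_bound: assumes S: "S > 0" and x: "x \<ge> 0"
  shows "x * exp (- S * x powr (2/\<alpha>)) * (S powr (-\<alpha>/2) + x)^2
     \<le> 2 * ((\<alpha>/2) powr (\<alpha>/2) + (3*(\<alpha>/2)) powr (3*(\<alpha>/2))) * (S powr (-\<alpha>/2))^3"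
proof -
  let ?t = "S powr (-\<alpha>/2)"
  let ?q = "S * x powr (2/\<alpha>)"
  let ?u = "?q powr (\<alpha>/2)"
  have "?u = S powr (\<alpha>/2) * x" using S x p_inv by (simp add: powr_mult)
  hence xu: "x = ?t * ?u" using S by (simp add: powr_add[symmetric])
  have "x * exp (- ?q) * (?t + x)^2 = ?t^3 * (?u * (1 + ?u)^2 * exp (- ?q))"
    by (subst (1 2) xu) (simp add: power2_eq_square power3_eq_cube algebra_simps)
  also have "\<dots> \<le> ?t^3 * (2 * ((\<alpha>/2) powr (\<alpha>/2) + (3*(\<alpha>/2)) powr (3*(\<alpha>/2))))"
    using q_bound[of ?q "\<alpha>/2"] S x a2 by (intro mult_left_mono) auto
  finally show ?thesis by (simp add: algebra_simps)
qed

lemma J_bound: assumes S: "S > 0"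
  shows "set_integrable lborel {0..} (\<lambda>x. x * exp (- S * x powr (2/\<alpha>)) / (1+x))"
    "(LBINT x:{0..}. x * exp (- S * x powr (2/\<alpha>)) / (1+x))
      \<le> 4 * ((\<alpha>/2) powr (\<alpha>/2) + (3*(\<alpha>/2)) powr (3*(\<alpha>/2))) * (S powr (-\<alpha>/2))^2"
proof -
  let ?t = "S powr (-\<alpha>/2)"
  let ?M = "2 * ((\<alpha>/2) powr (\<alpha>/2) + (3*(\<alpha>/2)) powr (3*(\<alpha>/2)))"
  have t: "?t > 0" using S by simp
  have ib: "set_integrable lborel {0..} (\<lambda>x. ?M * ?t^3 * (1/(?t+x)^2))"
    by (rule set_integrable_mult_right[OF int_inv_sq_shift(1)[OF t]])
  have pw: "x * exp (- S * x powr (2/\<alpha>)) / (1+x) \<le> ?M * ?t^3 * (1/(?t+x)^2)" if x: "x \<ge> 0" for x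
  proof -
    have "x * exp (- S * x powr (2/\<alpha>)) / (1+x) \<le> x * exp (- S * x powr (2/\<alpha>)) / 1"
      using x by (intro divide_left_mono) auto
    hence "x * exp (- S * x powr (2/\<alpha>)) / (1+x) \<le> x * exp (- S * x powr (2/\<alpha>))" by simp
    also have "\<dots> \<le> ?M * ?t^3 * (1/(?t+x)^2)"
    proof -
      have tx0: "?t + x > 0" using t x by linarith
      have tx: "(?t + x)^2 > 0" using tx0 by simp
      have "x * exp (- S * x powr (2/\<alpha>)) \<le> ?M * ?t^3 / (?t + x)^2"
        by (subst pos_le_divide_eq[OF tx]) (rule x_bound[OF S x])
      thus ?thesis by simp
    qed
    finally show ?thesis .
  qed
  show I: "set_integrable lborel {0..} (\<lambda>x. x * exp (- S * x powr (2/\<alpha>)) / (1+x))"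
  proof (rule set_integrable_bound[OF ib])
    show "set_borel_measurable lborel {0..} (\<lambda>x. x * exp (- S * x powr (2/\<alpha>)) / (1+x))"
      using set_measurable_continuous_on[of "{0..}" "\<lambda>x. x * exp (- S * x powr (2/\<alpha>)) / (1+x)"]
      unfolding set_borel_measurable_def by (simp add: continuous_intros p_cont)
    show "AE x in lborel. x \<in> {0..} \<longrightarrow> norm (x * exp (- S * x powr (2/\<alpha>)) / (1+x)) \<le> norm (?M * ?t^3 * (1/(?t+x)^2))"
    proof (intro AE_I2 impI)
      fix x :: real assume "x \<in> {0..}"
      hence x: "x \<ge> 0" by simp
      have a0: "0 \<le> x * exp (- S * x powr (2/\<alpha>)) / (1+x)" using x by simp
      have "norm (x * exp (- S * x powr (2/\<alpha>)) / (1+x)) = x * exp (- S * x powr (2/\<alpha>)) / (1+x)"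
        using a0 by (simp only: real_norm_def abs_of_nonneg)
      also have "\<dots> \<le> ?M * ?t^3 * (1/(?t+x)^2)" by (rule pw[OF x])
      also have "\<dots> \<le> norm (?M * ?t^3 * (1/(?t+x)^2))" by (simp only: real_norm_def abs_ge_self)
      finally show "norm (x * exp (- S * x powr (2/\<alpha>)) / (1+x)) \<le> norm (?M * ?t^3 * (1/(?t+x)^2))" .
    qed
  qed
  have "(LBINT x:{0..}. x * exp (- S * x powr (2/\<alpha>)) / (1+x)) \<le> (LBINT x:{0..}. ?M * ?t^3 * (1/(?t+x)^2))"
    by (rule set_integral_mono[OF I ib]) (use pw in auto)
  also have "\<dots> = ?M * ?t^3 * (LBINT x:{0..}. 1/(?t+x)^2)" by (rule set_integral_mult_right)
  also have "\<dots> \<le> ?M * ?t^3 * (2/?t)"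
    using int_inv_sq_shift(2)[OF t] t a2 by (intro mult_left_mono) auto
  also have "\<dots> = 4 * ((\<alpha>/2) powr (\<alpha>/2) + (3*(\<alpha>/2)) powr (3*(\<alpha>/2))) * ?t^2"
    using t by (simp add: power2_eq_square power3_eq_cube field_simps)
  finally show "(LBINT x:{0..}. x * exp (- S * x powr (2/\<alpha>)) / (1+x))
      \<le> 4 * ((\<alpha>/2) powr (\<alpha>/2) + (3*(\<alpha>/2)) powr (3*(\<alpha>/2))) * ?t^2" .
qed

lemma NEG_pw:
  fixes c x :: real assumes c: "c > 1" and x: "x \<ge> 0"
  shows "1 - c/(1+x) \<le> - ((c-1)/(c+1)) + ((1 + (c-1)/(c+1)) / ((c-1)/2)) * x"
proof (cases "x \<le> (c-1)/2")
  case True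
  have "c/(1+x) \<ge> c/(1 + (c-1)/2)" using x True c by (intro divide_left_mono mult_pos_pos) (auto simp: field_simps)
  also have "c/(1 + (c-1)/2) = 1 + (c-1)/(c+1)" using c by (simp add: field_simps)
  finally have "1 - c/(1+x) \<le> - ((c-1)/(c+1))" by simp
  moreover have "0 \<le> ((1 + (c-1)/(c+1)) / ((c-1)/2)) * x" using c x by simp
  ultimately show ?thesis by linarith
next
  case False
  have "((1 + (c-1)/(c+1)) / ((c-1)/2)) * x \<ge> ((1 + (c-1)/(c+1)) / ((c-1)/2)) * ((c-1)/2)"
    using False c by (intro mult_left_mono) auto
  also have "((1 + (c-1)/(c+1)) / ((c-1)/2)) * ((c-1)/2) = 1 + (c-1)/(c+1)" using c by simp
  finally have "- ((c-1)/(c+1)) + ((1 + (c-1)/(c+1)) / ((c-1)/2)) * x \<ge> 1" by simp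
  moreover have "c/(1+x) \<ge> 0" using c x by simp
  ultimately show ?thesis by linarith
qed

lemma NEG: assumes c: "c > 1"
  shows "\<exists>S1>0. \<forall>S\<ge>S1. kK \<alpha> S c < 0"
proof -
  define \<eta> where "\<eta> = (c-1)/(c+1)"
  define K where "K = (1 + \<eta>) / ((c-1)/2)"
  define C4 where "C4 = 4 * ((\<alpha>/2) powr (\<alpha>/2) + (3 * (\<alpha>/2)) powr (3 * (\<alpha>/2)))"
  have \<eta>: "\<eta> > 0" unfolding \<eta>_def using c by simp
  have K: "K > 0" unfolding K_def using c \<eta> by simp
  have C4: "C4 > 0" unfolding C4_def using a2 by (simp add: add_pos_nonneg)
  define \<tau> where "\<tau> = \<eta> * (exp (-1) / 2) / (K * C4)"
  have \<tau>: "\<tau> > 0" unfolding \<tau>_def using \<eta> K C4 by simp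
  define m where "m = min 1 (\<tau>/2)"
  have m: "m > 0" "m \<le> 1" "m < \<tau>" unfolding m_def using \<tau> by auto
  define S1 where "S1 = m powr (-2/\<alpha>)"
  have S1: "S1 > 0" unfolding S1_def using m by simp
  have S1m: "S1 powr (-\<alpha>/2) = m" unfolding S1_def using m a2 by (simp add: powr_powr)
  show ?thesis
  proof (intro exI[of _ S1] conjI allI impI S1)
    fix S assume SS: "S \<ge> S1"
    hence S: "S > 0" using S1 by simp
    let ?t = "S powr (-\<alpha>/2)"
    have tm: "?t \<le> m" unfolding S1m[symmetric] using SS S1 a2 by (intro powr_mono2') auto
    have t0: "?t > 0" using S by simp
    let ?e = "\<lambda>x. exp (- S * x powr (2/\<alpha>))"
    have iJ: "set_integrable lborel {0..} (\<lambda>x. x * ?e x / (1+x))" by (rule J_bound(1)[OF S])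
    have iA: "set_integrable lborel {0..} (\<lambda>x. \<eta> * (?e x / (1+x)))"
      by (rule set_integrable_mult_right[OF int0[OF S]])
    have "kK \<alpha> S c = (LBINT x:{0..}. ?e x/(1+x) - c * (?e x/(1+x)^2))" by (rule kK_eq(1)[OF S])
    also have "\<dots> \<le> (LBINT x:{0..}. K * (x * ?e x / (1+x)) - \<eta> * (?e x / (1+x)))"
    proof (rule set_integral_mono[OF kK_eq(2)[OF S] sint_lin2(1)[OF iJ iA]])
      fix x :: real assume "x \<in> {0..}"
      hence x: "x \<ge> 0" by simp
      have g: "e/d - c*(e/d^2) = (1 - c/d)*(e/d)" if "d \<noteq> 0" for d e :: real
        using that by (simp add: field_simps power2_eq_square)
      have "?e x/(1+x) - c * (?e x/(1+x)^2) = (1 - c/(1+x)) * (?e x/(1+x))"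
        using x by (intro g) simp
      also have "\<dots> \<le> (- \<eta> + K * x) * (?e x/(1+x))"
        using NEG_pw[OF c x] x unfolding \<eta>_def K_def by (intro mult_right_mono) auto
      also have "\<dots> = K * (x * ?e x / (1+x)) - \<eta> * (?e x / (1+x))" by (simp add: divide_inverse algebra_simps)
      finally show "?e x/(1+x) - c * (?e x/(1+x)^2) \<le> K * (x * ?e x / (1+x)) - \<eta> * (?e x / (1+x))" .
    qed
    also have "\<dots> = K * (LBINT x:{0..}. x * ?e x / (1+x)) - \<eta> * vrag_kernel \<alpha> S"
      unfolding sint_lin2(2)[OF iJ iA] vrag_kernel_def set_integral_mult_right ..
    also have "\<dots> \<le> K * (C4 * ?t^2) - \<eta> * (?t * (exp (-1) / 2))"
      using J_bound(2)[OF S] kA_lower_small[OF S] tm m K \<eta> unfolding C4_def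
      by (intro diff_mono mult_left_mono) auto
    also have "\<dots> < 0"
    proof -
      have "K * C4 * ?t < K * C4 * \<tau>" using tm m K C4 by (intro mult_strict_left_mono) auto
      also have "K * C4 * \<tau> = \<eta> * (exp (-1) / 2)" unfolding \<tau>_def using K C4 by simp
      finally have "K * C4 * ?t * ?t < \<eta> * (exp (-1) / 2) * ?t" using t0 by (intro mult_strict_right_mono)
      thus ?thesis by (simp add: power2_eq_square algebra_simps)
    qed
    finally show "kK \<alpha> S c < 0" .
  qed
qed

lemma kA_cont: "S > 0 \<Longrightarrow> isCont (vrag_kernel \<alpha>) S"
  using kA_deriv DERIV_isCont by blast

lemma Dv_cont: assumes "a + l > 0" shows "isCont (\<lambda>l. Dv \<alpha> a l) l"
proof -
  have c1: "isCont (\<lambda>l. vrag_kernel \<alpha> (a + l)) l"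
    using isCont_o2[where f="\<lambda>l. a+l" and g="vrag_kernel \<alpha>" and a=l] kA_cont[OF assms] by simp
  have c2: "isCont (\<lambda>l. kB \<alpha> (a + l)) l"
    using isCont_o2[where f="\<lambda>l. a+l" and g="kB \<alpha>" and a=l] kB_cont[OF assms] by simp
  show ?thesis unfolding Dv_def using c1 c2 by (intro continuous_intros)
qed

lemma Dv_sym_cont: assumes "L > 0" shows "isCont (\<lambda>L. Dv \<alpha> L L) L"
proof -
  have p: "L + L > 0" using assms by simp
  have c1: "isCont (\<lambda>l. vrag_kernel \<alpha> (l + l)) L"
    using isCont_o2[where f="\<lambda>l. l+l" and g="vrag_kernel \<alpha>" and a=L] kA_cont[OF p] by simp
  have c2: "isCont (\<lambda>l. kB \<alpha> (l + l)) L"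
    using isCont_o2[where f="\<lambda>l. l+l" and g="kB \<alpha>" and a=L] kB_cont[OF p] by simp
  show ?thesis unfolding Dv_def using c1 c2 by (intro continuous_intros)
qed

lemma kK_anti: "S \<ge> 0 \<Longrightarrow> c \<le> c' \<Longrightarrow> kK \<alpha> S c' \<le> kK \<alpha> S c"
  unfolding kK_def using kC_pos[of S] by (simp add: mult_right_mono)

lemma P1: assumes a: "a > 0" shows "\<exists>l>0. Dv \<alpha> a l > 0"
proof -
  define l where "l = min 1 (vrag_kernel \<alpha> (a+1) / (2 * kB \<alpha> a))"
  have A1: "vrag_kernel \<alpha> (a+1) > 0" using kA_pos a by simp
  have B: "kB \<alpha> a > 0" using kB_pos a by simp
  have l: "l > 0" "l \<le> 1" "l \<le> vrag_kernel \<alpha> (a+1) / (2 * kB \<alpha> a)" unfolding l_def using A1 B by auto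
  have "vrag_kernel \<alpha> (a+1) \<le> vrag_kernel \<alpha> (a+l)" using kA_mono[of "a+l" "a+1"] a l by simp
  moreover have "l * kB \<alpha> (a+l) \<le> l * kB \<alpha> a" using kB_mono[of a "a+l"] a l by (intro mult_left_mono) auto
  moreover have "l * kB \<alpha> a \<le> vrag_kernel \<alpha> (a+1) / 2" using l(3) B by (simp add: field_simps)
  ultimately have "Dv \<alpha> a l \<ge> vrag_kernel \<alpha> (a+1) / 2" unfolding Dv_def by linarith
  thus ?thesis using l A1 by (intro exI[of _ l]) auto
qed

lemma P2: assumes a: "a \<ge> 0" shows "\<exists>l>0. Dv \<alpha> a l < 0"
proof -
  define c1 where "c1 = (1 + \<alpha>/2)/2"
  have c1: "c1 > 1" "c1 < \<alpha>/2" unfolding c1_def using a2 by auto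
  obtain S1 where S1: "S1 > 0" "\<forall>S\<ge>S1. kK \<alpha> S c1 < 0" using NEG[OF c1(1)] by auto
  define l where "l = max S1 (c1 * a / (\<alpha>/2 - c1)) + 1"
  have l: "l > 0" "l \<ge> S1" "l \<ge> c1 * a / (\<alpha>/2 - c1)" unfolding l_def using S1 by auto
  have al: "a + l > 0" using a l by simp
  have "c1 * a \<le> l * (\<alpha>/2 - c1)" using l(3) c1 by (simp add: field_simps)
  hence cc: "c1 \<le> (\<alpha>/2) * (l/(a+l))" using al by (simp add: field_simps)
  have "Dv \<alpha> a l = kK \<alpha> (a+l) ((\<alpha>/2) * (l/(a+l)))" by (rule Dv_kK[OF al])
  also have "\<dots> \<le> kK \<alpha> (a+l) c1" using al cc by (intro kK_anti) auto
  also have "\<dots> < 0" using S1 l a by auto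
  finally show ?thesis using l by auto
qed

lemma P3: assumes a4: "\<alpha> > 4" shows "\<exists>L>0. Dv \<alpha> L L < 0"
proof -
  obtain S1 where S1: "S1 > 0" "\<forall>S\<ge>S1. kK \<alpha> S (\<alpha>/4) < 0" using NEG[of "\<alpha>/4"] a4 by auto
  have "Dv \<alpha> S1 S1 = kK \<alpha> (S1+S1) (\<alpha>/4)" using Dv_kK[of S1 S1] S1 by (simp add: field_simps)
  also have "\<dots> < 0" using S1 by auto
  finally show ?thesis using S1 by auto
qed

lemma P5: assumes a4: "\<alpha> \<le> 4" and L: "L > 0" shows "Dv \<alpha> L L > 0"
proof -
  have LL: "L + L > 0" using L by simp
  have "Dv \<alpha> L L = kK \<alpha> (L+L) (\<alpha>/4)" using Dv_kK[OF LL] L by (simp add: field_simps)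
  also have "\<dots> = (LBINT x:{0..}. exp (- (L+L) * x powr (2/\<alpha>))/(1+x) - (\<alpha>/4) * (exp (- (L+L) * x powr (2/\<alpha>))/(1+x)^2))"
    by (rule kK_eq(1)[OF LL])
  also have "\<dots> > 0"
  proof (rule set_integral_pos_tail[OF kK_eq(2)[OF LL], where c=0])
    have g: "e/d - c*(e/d^2) = (1 - c/d)*(e/d)" if "d \<noteq> 0" for d e c :: real
      using that by (simp add: field_simps power2_eq_square)
    fix x :: real
    {
      assume x: "x \<ge> 0"
      have "\<alpha>/4/(1+x) \<le> 1/(1+x)" using a4 x by (intro divide_right_mono) auto
      also have "\<dots> \<le> 1" using x by simp
      finally have "1 - \<alpha>/4/(1+x) \<ge> 0" by simp
      thus "0 \<le> exp (- (L+L) * x powr (2/\<alpha>))/(1+x) - (\<alpha>/4) * (exp (- (L+L) * x powr (2/\<alpha>))/(1+x)^2)"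
        unfolding g[of "1+x", OF _] using x by (subst g) auto
    }
    assume x: "x > 0"
    have "\<alpha>/4/(1+x) \<le> 1/(1+x)" using a4 x by (intro divide_right_mono) auto
    also have "\<dots> < 1" using x by simp
    finally have "1 - \<alpha>/4/(1+x) > 0" by simp
    thus "0 < exp (- (L+L) * x powr (2/\<alpha>))/(1+x) - (\<alpha>/4) * (exp (- (L+L) * x powr (2/\<alpha>))/(1+x)^2)"
      using x by (subst g) auto
  qed simp
  finally show ?thesis .
qed

lemma P4: assumes a4: "\<alpha> > 4" shows "\<exists>L>0. Dv \<alpha> L L > 0"
proof -
  define Q where "Q = (\<alpha>/4) * kC \<alpha> 0"
  have Q: "Q \<ge> 0" unfolding Q_def using kC_pos[of 0] a4 by simp
  define R where "R = exp (2 * (Q + 1)) - 1"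
  have R: "R \<ge> 0" unfolding R_def using Q by simp
  have lnR: "ln (1 + R) = 2 * (Q + 1)" unfolding R_def by simp
  define L where "L = ln 2 / (2 * (R powr (2/\<alpha>) + 1))"
  have Rb: "R powr (2/\<alpha>) \<ge> 0" by simp
  have L: "L > 0" unfolding L_def using Rb by (intro divide_pos_pos mult_pos_pos add_nonneg_pos) auto
  have LL: "L + L > 0" using L by simp
  have Rb1: "0 < R powr (2/\<alpha>) + 1" by (rule add_nonneg_pos) auto
  have "2 * L * R powr (2/\<alpha>) \<le> ln 2"
  proof -
    have g: "2 * (q / (2 * (r + 1))) * r = q * (r / (r + 1))" if "r \<ge> 0" for q r :: real
    proof -
      have "r + 1 \<noteq> 0" using that by linarith
      thus ?thesis by (simp add: field_simps)
    qed
    have "2 * L * R powr (2/\<alpha>) = ln 2 * (R powr (2/\<alpha>) / (R powr (2/\<alpha>) + 1))"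
      unfolding L_def by (rule g[OF Rb])
    also have "\<dots> \<le> ln 2 * 1" by (intro mult_left_mono) (auto simp: divide_le_eq_1 Rb1)
    finally show ?thesis by simp
  qed
  hence "exp (- (L+L) * R powr (2/\<alpha>)) \<ge> exp (- ln 2)" by simp
  hence e: "exp (- (L+L) * R powr (2/\<alpha>)) \<ge> 1/2" by (simp add: exp_minus)
  have "exp (- (L+L) * R powr (2/\<alpha>)) * ln (1+R) \<le> vrag_kernel \<alpha> (L+L)" by (rule kA_lower_log[OF LL R])
  moreover have "(1/2) * ln (1+R) \<le> exp (- (L+L) * R powr (2/\<alpha>)) * ln (1+R)"
    using e lnR Q by (intro mult_right_mono) auto
  moreover have "(1/2) * ln (1+R) = Q + 1" using lnR by simp
  ultimately have kA: "vrag_kernel \<alpha> (L+L) \<ge> Q + 1" by linarith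
  have "Dv \<alpha> L L = vrag_kernel \<alpha> (L+L) - (\<alpha>/4) * kC \<alpha> (L+L)"
    using Dv_kK[OF LL] L unfolding kK_def by (simp add: field_simps)
  also have "\<dots> \<ge> vrag_kernel \<alpha> (L+L) - Q"
    unfolding Q_def using kC_mono[of 0 "L+L"] L a4 by (simp add: mult_left_mono)
  finally show ?thesis using kA L by (intro exI[of _ L]) auto
qed

lemma below_root: "a \<ge> 0 \<Longrightarrow> Dv \<alpha> a r = 0 \<Longrightarrow> 0 < l \<Longrightarrow> l < r \<Longrightarrow> Dv \<alpha> a l > 0"
  using SC[of a l r] by force

lemma above_root: "a \<ge> 0 \<Longrightarrow> Dv \<alpha> a r = 0 \<Longrightarrow> 0 < r \<Longrightarrow> r < l \<Longrightarrow> Dv \<alpha> a l < 0"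
  using SC[of a r l] by force

lemma below_root_sym: "Dv \<alpha> r r = 0 \<Longrightarrow> 0 < l \<Longrightarrow> l < r \<Longrightarrow> Dv \<alpha> l l > 0"
  using SC_sym[of l r] by force

lemma above_root_sym: "Dv \<alpha> r r = 0 \<Longrightarrow> 0 < r \<Longrightarrow> r < l \<Longrightarrow> Dv \<alpha> l l < 0"
  using SC_sym[of r l] by force

lemma root_ex: assumes a: "a > 0" shows "\<exists>!r. r > 0 \<and> Dv \<alpha> a r = 0"
proof -
  obtain lp where lp: "lp > 0" "Dv \<alpha> a lp > 0" using P1[OF a] by auto
  obtain ln where ln: "ln > 0" "Dv \<alpha> a ln < 0" using P2[of a] a by auto
  have "lp < ln"
  proof (rule ccontr)
    assume "\<not> lp < ln"
    hence "ln < lp \<or> ln = lp" by auto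
    thus False
    proof
      assume "ln < lp" thus False using SC[of a ln lp] a ln lp by auto
    qed (use ln lp in auto)
  qed
  then obtain r where r: "lp \<le> r" "r \<le> ln" "Dv \<alpha> a r = 0"
    using IVT2[of "\<lambda>l. Dv \<alpha> a l" ln 0 lp] lp ln a Dv_cont by force
  show ?thesis
  proof (rule ex1I[of _ r])
    show "r > 0 \<and> Dv \<alpha> a r = 0" using r lp by auto
    fix r' assume r': "r' > 0 \<and> Dv \<alpha> a r' = 0"
    show "r' = r"
    proof (rule ccontr)
      assume "r' \<noteq> r"
      hence "r' < r \<or> r < r'" by auto
      thus False using above_root[of a r' r] above_root[of a r r'] r r' lp a by force
    qed
  qed
qed

lemma root_sym_ex: assumes a4: "\<alpha> > 4" shows "\<exists>!r. r > 0 \<and> Dv \<alpha> r r = 0"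
proof -
  obtain lp where lp: "lp > 0" "Dv \<alpha> lp lp > 0" using P4[OF a4] by auto
  obtain ln where ln: "ln > 0" "Dv \<alpha> ln ln < 0" using P3[OF a4] by auto
  have "lp < ln"
  proof (rule ccontr)
    assume "\<not> lp < ln"
    hence "ln < lp \<or> ln = lp" by auto
    thus False
    proof
      assume "ln < lp" thus False using SC_sym[of ln lp] ln lp by auto
    qed (use ln lp in auto)
  qed
  then obtain r where r: "lp \<le> r" "r \<le> ln" "Dv \<alpha> r r = 0"
    using IVT2[of "\<lambda>l. Dv \<alpha> l l" ln 0 lp] lp ln Dv_sym_cont by force
  show ?thesis
  proof (rule ex1I[of _ r])
    show "r > 0 \<and> Dv \<alpha> r r = 0" using r lp by auto
    fix r' assume r': "r' > 0 \<and> Dv \<alpha> r' r' = 0"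
    show "r' = r"
    proof (rule ccontr)
      assume "r' \<noteq> r"
      hence "r' < r \<or> r < r'" by auto
      thus False using above_root_sym[of r' r] above_root_sym[of r r'] r r' lp by force
    qed
  qed
qed

lemma Lhat_prop: assumes N1: "N1 > 0"
  shows "Lambda_hat \<alpha> N1 > 0" "Dv \<alpha> N1 (Lambda_hat \<alpha> N1) = 0"
proof -
  have eq: "(L > 0 \<and> (LBINT x:{0..}. (1 - L * x powr (2 / \<alpha>)) / (1 + x) * exp (- (N1 + L) * x powr (2 / \<alpha>))) = 0)
      \<longleftrightarrow> (L > 0 \<and> Dv \<alpha> N1 L = 0)" for L
    using Dv_int[of N1 L] N1 by auto
  have "Lambda_hat \<alpha> N1 = (THE L. L > 0 \<and> Dv \<alpha> N1 L = 0)"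
    unfolding Lambda_hat_def eq ..
  hence "Lambda_hat \<alpha> N1 > 0 \<and> Dv \<alpha> N1 (Lambda_hat \<alpha> N1) = 0"
    using theI'[OF root_ex[OF N1]] by simp
  thus "Lambda_hat \<alpha> N1 > 0" "Dv \<alpha> N1 (Lambda_hat \<alpha> N1) = 0" by auto
qed

lemma Lpp_prop: assumes a4: "\<alpha> > 4"
  shows "\<exists>L. Lambda_pp \<alpha> = ereal L \<and> L > 0 \<and> Dv \<alpha> L L = 0"
proof -
  have eq: "(L > 0 \<and> (LBINT x:{0..}. (1 - L * x powr (2 / \<alpha>)) / (1 + x) * exp (- 2 * L * x powr (2 / \<alpha>))) = 0)
      \<longleftrightarrow> (L > 0 \<and> Dv \<alpha> L L = 0)" for L
    using Dv_int_sym[of L] by auto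
  have "Lambda_pp \<alpha> = ereal (THE L. L > 0 \<and> Dv \<alpha> L L = 0)"
    unfolding Lambda_pp_def eq using a4 by simp
  moreover have "(THE L. L > 0 \<and> Dv \<alpha> L L = 0) > 0 \<and> Dv \<alpha> (THE L. L > 0 \<and> Dv \<alpha> L L = 0) (THE L. L > 0 \<and> Dv \<alpha> L L = 0) = 0"
    using theI'[OF root_sym_ex[OF a4]] .
  ultimately show ?thesis by blast
qed

lemma u_deriv: assumes am: "a + m > 0"
  shows "((\<lambda>m. m * vrag_kernel \<alpha> (a + m)) has_real_derivative Dv \<alpha> a m) (at m)"
proof -
  have "((\<lambda>m. vrag_kernel \<alpha> (m + a)) has_real_derivative - kB \<alpha> (m + a)) (at m)"
    using kA_deriv[of "m + a"] am DERIV_shift[of "vrag_kernel \<alpha>" "- kB \<alpha> (m + a)" m a] by (simp add: add.commute)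
  hence d: "((\<lambda>m. vrag_kernel \<alpha> (a + m)) has_real_derivative - kB \<alpha> (a + m)) (at m)"
    by (simp add: add.commute)
  have "((\<lambda>m. m * vrag_kernel \<alpha> (a + m)) has_real_derivative 1 * vrag_kernel \<alpha> (a + m) + (- kB \<alpha> (a + m)) * m) (at m)"
    by (rule DERIV_mult[OF DERIV_ident d])
  thus ?thesis unfolding Dv_def by (simp add: algebra_simps)
qed

lemma BR: assumes a: "a > 0" and N: "N > 0" and l: "0 \<le> l" "l \<le> N"
  shows "(\<forall>m\<in>{0..N}. m * vrag_kernel \<alpha> (a + m) \<le> l * vrag_kernel \<alpha> (a + l))
     \<longleftrightarrow> (0 < l \<and> 0 \<le> Dv \<alpha> a l \<and> (l = N \<or> Dv \<alpha> a l = 0))"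
proof
  let ?u = "\<lambda>m. m * vrag_kernel \<alpha> (a + m)"
  assume max: "\<forall>m\<in>{0..N}. ?u m \<le> ?u l"
  have "?u N > 0" using N a kA_pos[of "a+N"] by simp
  moreover have "?u N \<le> ?u l" using max N by auto
  ultimately have l0: "l > 0" using l by (cases "l = 0") auto
  have D: "DERIV ?u l :> Dv \<alpha> a l" using u_deriv[of a l] a l by simp
  have D0: "0 \<le> Dv \<alpha> a l"
  proof (rule ccontr)
    assume "\<not> 0 \<le> Dv \<alpha> a l"
    then obtain d where d: "d > 0" "\<forall>h>0. h < d \<longrightarrow> ?u l < ?u (l - h)"
      using DERIV_neg_dec_left[OF D] by auto
    define h where "h = min (d/2) l"
    have h: "h > 0" "h < d" "h \<le> l" unfolding h_def using d l0 by auto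
    have "?u l < ?u (l - h)" using d h by auto
    moreover have "?u (l - h) \<le> ?u l" using max h l by auto
    ultimately show False by simp
  qed
  have "l = N \<or> Dv \<alpha> a l = 0"
  proof (rule ccontr)
    assume "\<not> (l = N \<or> Dv \<alpha> a l = 0)"
    hence lN: "l < N" and Dp: "Dv \<alpha> a l > 0" using l D0 by auto
    then obtain d where d: "d > 0" "\<forall>h>0. h < d \<longrightarrow> ?u l < ?u (l + h)"
      using DERIV_pos_inc_right[OF D] by auto
    define h where "h = min (d/2) (N - l)"
    have h: "h > 0" "h < d" "h \<le> N - l" unfolding h_def using d lN by auto
    have "?u l < ?u (l + h)" using d h by auto
    moreover have "?u (l + h) \<le> ?u l" using max h l by auto
    ultimately show False by simp
  qed
  thus "0 < l \<and> 0 \<le> Dv \<alpha> a l \<and> (l = N \<or> Dv \<alpha> a l = 0)" using l0 D0 by auto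
next
  let ?u = "\<lambda>m. m * vrag_kernel \<alpha> (a + m)"
  assume H: "0 < l \<and> 0 \<le> Dv \<alpha> a l \<and> (l = N \<or> Dv \<alpha> a l = 0)"
  show "\<forall>m\<in>{0..N}. ?u m \<le> ?u l"
  proof
    fix m assume m: "m \<in> {0..N}"
    show "?u m \<le> ?u l"
    proof (cases "m \<le> l")
      case True
      show ?thesis
      proof (rule DERIV_nonneg_imp_nondecreasing[OF True])
        fix y assume y: "m \<le> y" "y \<le> l"
        have "Dv \<alpha> a y \<ge> 0"
        proof (cases "y = l")
          case True thus ?thesis using H by simp
        next
          case False
          hence yl: "y < l" using y by simp
          show ?thesis
          proof (cases "y > 0")
            case True
            show ?thesis
            proof (rule ccontr)
              assume "\<not> Dv \<alpha> a y \<ge> 0"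
              hence "Dv \<alpha> a l < 0" using SC[of a y l] a True yl by auto
              thus False using H by simp
            qed
          next
            case False
            hence "y = 0" using y m by auto
            thus ?thesis unfolding Dv_def using kA_pos[of a] a by simp
          qed
        qed
        thus "\<exists>d. DERIV ?u y :> d \<and> d \<ge> 0" using u_deriv[of a y] a y m by auto
      qed
    next
      case False
      hence ml: "l < m" by simp
      hence lN: "l < N" using m by simp
      hence Dl: "Dv \<alpha> a l = 0" using H by auto
      show ?thesis
      proof (rule DERIV_nonpos_imp_nonincreasing[of l m])
        show "l \<le> m" using ml by simp
        fix y assume y: "l \<le> y" "y \<le> m"
        have "Dv \<alpha> a y \<le> 0"
        proof (cases "y = l")
          case True thus ?thesis using Dl by simp
        next
          case False
          hence "l < y" using y by simp
          thus ?thesis using above_root[of a l y] a Dl H by auto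
        qed
        thus "\<exists>d. DERIV ?u y :> d \<and> d \<le> 0" using u_deriv[of a y] a y H by auto
      qed
    qed
  qed
qed

lemma Dv_cmp: "Dv \<alpha> l2 l1 - Dv \<alpha> l1 l2 = (l2 - l1) * kB \<alpha> (l1 + l2)"
  unfolding Dv_def by (simp add: add.commute algebra_simps)

lemma Dv_cmp_le: "0 < l1 \<Longrightarrow> l1 \<le> l2 \<Longrightarrow> Dv \<alpha> l1 l2 \<le> Dv \<alpha> l2 l1"
proof -
  assume "0 < l1" "l1 \<le> l2"
  hence "(l2 - l1) * kB \<alpha> (l1 + l2) \<ge> 0" using kB_pos[of "l1 + l2"] by (intro mult_nonneg_nonneg) auto
  thus ?thesis using Dv_cmp[of l2 l1] by linarith
qed

lemma Dv_cmp_lt: "0 < l1 \<Longrightarrow> l1 < l2 \<Longrightarrow> Dv \<alpha> l1 l2 < Dv \<alpha> l2 l1"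
proof -
  assume "0 < l1" "l1 < l2"
  hence "(l2 - l1) * kB \<alpha> (l1 + l2) > 0" using kB_pos[of "l1 + l2"] by (intro mult_pos_pos) auto
  thus ?thesis using Dv_cmp[of l2 l1] by linarith
qed

lemma NEc: assumes N1: "N1 > 0" and N2: "N2 > 0"
  shows "is_nash \<alpha> N1 N2 l1 l2 \<longleftrightarrow>
    (l1 \<le> N1 \<and> l2 \<le> N2 \<and> 0 < l1 \<and> 0 < l2 \<and>
     0 \<le> Dv \<alpha> l2 l1 \<and> (l1 = N1 \<or> Dv \<alpha> l2 l1 = 0) \<and>
     0 \<le> Dv \<alpha> l1 l2 \<and> (l2 = N2 \<or> Dv \<alpha> l1 l2 = 0))"
proof -
  have U1: "U1 \<alpha> m l2 = m * vrag_kernel \<alpha> (l2 + m)" for m unfolding U1_def by (simp add: add.commute)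
  have U2: "U2 \<alpha> l1 m = m * vrag_kernel \<alpha> (l1 + m)" for m unfolding U2_def by simp
  show ?thesis
  proof
    assume ne: "is_nash \<alpha> N1 N2 l1 l2"
    have r: "0 \<le> l1" "l1 \<le> N1" "0 \<le> l2" "l2 \<le> N2" using ne unfolding is_nash_def by auto
    have m1: "\<forall>m\<in>{0..N1}. m * vrag_kernel \<alpha> (l2 + m) \<le> l1 * vrag_kernel \<alpha> (l2 + l1)"
      using ne unfolding is_nash_def U1 by auto
    have m2: "\<forall>m\<in>{0..N2}. m * vrag_kernel \<alpha> (l1 + m) \<le> l2 * vrag_kernel \<alpha> (l1 + l2)"
      using ne unfolding is_nash_def U2 by auto
    have l2p: "l2 > 0"
    proof (rule ccontr)
      assume "\<not> l2 > 0"
      hence l20: "l2 = 0" using r by simp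
      have l1p: "l1 > 0"
      proof (rule ccontr)
        assume "\<not> l1 > 0"
        hence "l1 = 0" using r by simp
        moreover have "N1 * vrag_kernel \<alpha> (l2 + N1) \<le> l1 * vrag_kernel \<alpha> (l2 + l1)" using m1 N1 by auto
        ultimately show False using mult_pos_pos[OF N1 kA_pos[OF N1]] l20 by simp
      qed
      have "0 < l2" using BR[OF l1p N2 r(3,4)] m2 by simp
      thus False using l20 by simp
    qed
    have b1: "0 < l1 \<and> 0 \<le> Dv \<alpha> l2 l1 \<and> (l1 = N1 \<or> Dv \<alpha> l2 l1 = 0)"
      using BR[OF l2p N1 r(1,2)] m1 by simp
    have b2: "0 < l2 \<and> 0 \<le> Dv \<alpha> l1 l2 \<and> (l2 = N2 \<or> Dv \<alpha> l1 l2 = 0)"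
      using BR[of l1 N2 l2] b1 N2 r m2 by simp
    show "l1 \<le> N1 \<and> l2 \<le> N2 \<and> 0 < l1 \<and> 0 < l2 \<and>
     0 \<le> Dv \<alpha> l2 l1 \<and> (l1 = N1 \<or> Dv \<alpha> l2 l1 = 0) \<and>
     0 \<le> Dv \<alpha> l1 l2 \<and> (l2 = N2 \<or> Dv \<alpha> l1 l2 = 0)" using r b1 b2 by auto
  next
    assume H: "l1 \<le> N1 \<and> l2 \<le> N2 \<and> 0 < l1 \<and> 0 < l2 \<and>
     0 \<le> Dv \<alpha> l2 l1 \<and> (l1 = N1 \<or> Dv \<alpha> l2 l1 = 0) \<and>
     0 \<le> Dv \<alpha> l1 l2 \<and> (l2 = N2 \<or> Dv \<alpha> l1 l2 = 0)"
    have m1: "\<forall>m\<in>{0..N1}. m * vrag_kernel \<alpha> (l2 + m) \<le> l1 * vrag_kernel \<alpha> (l2 + l1)"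
      using BR[of l2 N1 l1] H N1 by auto
    have m2: "\<forall>m\<in>{0..N2}. m * vrag_kernel \<alpha> (l1 + m) \<le> l2 * vrag_kernel \<alpha> (l1 + l2)"
      using BR[of l1 N2 l2] H N2 by auto
    show "is_nash \<alpha> N1 N2 l1 l2" unfolding is_nash_def U1 U2 using m1 m2 H by auto
  qed
qed

lemma main_ctx: assumes N1: "0 < N1" and N12: "N1 \<le> N2"
  shows "(\<exists>!p. is_nash \<alpha> N1 N2 (fst p) (snd p)) \<and>
         (ereal N1 \<le> Lambda_pp \<alpha> \<and> N2 \<le> Lambda_hat \<alpha> N1 \<longrightarrow>
           is_nash \<alpha> N1 N2 N1 N2) \<and>
         (ereal N1 \<le> Lambda_pp \<alpha> \<and> N2 > Lambda_hat \<alpha> N1 \<longrightarrow>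
           is_nash \<alpha> N1 N2 N1 (Lambda_hat \<alpha> N1)) \<and>
         (ereal N1 > Lambda_pp \<alpha> \<longrightarrow>
           (\<exists>L. Lambda_pp \<alpha> = ereal L \<and> is_nash \<alpha> N1 N2 L L))"
proof -
  have N2: "N2 > 0" using N1 N12 by simp
  define Lh where "Lh = Lambda_hat \<alpha> N1"
  have Lh: "Lh > 0" "Dv \<alpha> N1 Lh = 0" unfolding Lh_def using Lhat_prop[OF N1] by auto
  note NE = NEc[OF N1 N2]
  have F1: "l1 = l2 \<and> Dv \<alpha> l1 l1 = 0" if "is_nash \<alpha> N1 N2 l1 l2" "l1 < N1" "l2 < N2" for l1 l2
  proof -
    have h: "0 < l1" "0 < l2" "Dv \<alpha> l2 l1 = 0" "Dv \<alpha> l1 l2 = 0" using that NE by auto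
    have "l1 = l2"
    proof (rule ccontr)
      assume "l1 \<noteq> l2"
      hence "l1 < l2 \<or> l2 < l1" by auto
      thus False using Dv_cmp_lt[of l1 l2] Dv_cmp_lt[of l2 l1] h by auto
    qed
    thus ?thesis using h by simp
  qed
  have F2: "False" if "is_nash \<alpha> N1 N2 l1 l2" "l1 < N1" "l2 = N2" for l1 l2
  proof -
    have h: "0 < l1" "Dv \<alpha> N2 l1 = 0" "0 \<le> Dv \<alpha> l1 N2" using that NE by auto
    have "l1 < N2" using that N12 by simp
    thus False using Dv_cmp_lt[of l1 N2] h by simp
  qed
  have F3: "l2 = Lh \<and> N1 \<le> l2" if "is_nash \<alpha> N1 N2 l1 l2" "l1 = N1" "l2 < N2" for l1 l2
  proof -
    have h: "0 < l2" "Dv \<alpha> N1 l2 = 0" "0 \<le> Dv \<alpha> l2 N1" using that NE by auto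
    have "l2 = Lh" using root_ex[OF N1] h Lh by auto
    moreover have "N1 \<le> l2"
    proof (rule ccontr)
      assume "\<not> N1 \<le> l2"
      thus False using Dv_cmp_lt[of l2 N1] h by simp
    qed
    ultimately show ?thesis by simp
  qed
  have F4: "0 \<le> Dv \<alpha> N1 N2" if "is_nash \<alpha> N1 N2 N1 N2" using that NE by auto
  have regA: "\<forall>l1 l2. is_nash \<alpha> N1 N2 l1 l2 \<longleftrightarrow> (l1, l2) = (if N2 \<le> Lh then (N1, N2) else (N1, Lh))"
    if A: "ereal N1 \<le> Lambda_pp \<alpha>"
  proof -
    have DS: "Dv \<alpha> N1 N1 \<ge> 0"
    proof (cases "\<alpha> > 4")
      case True
      then obtain L where L: "Lambda_pp \<alpha> = ereal L" "L > 0" "Dv \<alpha> L L = 0" using Lpp_prop by blast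
      have "N1 \<le> L" using A L by simp
      thus ?thesis using below_root_sym[of L N1] L N1 by (cases "N1 = L") auto
    next
      case False thus ?thesis using P5[of N1] N1 by simp
    qed
    have N1Lh: "N1 \<le> Lh"
    proof (rule ccontr)
      assume "\<not> N1 \<le> Lh"
      thus False using above_root[of N1 Lh N1] Lh N1 DS by simp
    qed
    have noint: "False" if "is_nash \<alpha> N1 N2 l1 l2" "l1 < N1" for l1 l2
    proof (cases "l2 = N2")
      case True thus False using F2 that by blast
    next
      case False
      hence "l2 < N2" using that NE by auto
      hence h: "l1 = l2" "Dv \<alpha> l1 l1 = 0" using F1 that by auto
      have l1p: "l1 > 0" using that NE by auto
      show False
      proof (cases "\<alpha> > 4")
        case True
        then obtain L where L: "Lambda_pp \<alpha> = ereal L" "L > 0" "Dv \<alpha> L L = 0" using Lpp_prop by blast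
        have "l1 = L" using root_sym_ex[OF True] h l1p L by auto
        thus False using A L that by simp
      next
        case False thus False using P5[of l1] l1p h by simp
      qed
    qed
    show ?thesis
    proof (intro allI iffI)
      fix l1 l2 assume ne: "is_nash \<alpha> N1 N2 l1 l2"
      have l1: "l1 = N1" using noint[OF ne] ne NE by force
      show "(l1, l2) = (if N2 \<le> Lh then (N1, N2) else (N1, Lh))"
      proof (cases "l2 = N2")
        case True
        have "0 \<le> Dv \<alpha> N1 N2" using F4 ne l1 True by simp
        hence "N2 \<le> Lh" using above_root[of N1 Lh N2] Lh N1 by force
        thus ?thesis using l1 True by simp
      next
        case False
        hence "l2 < N2" using ne NE by auto
        hence "l2 = Lh" using F3 ne l1 by auto
        thus ?thesis using l1 \<open>l2 < N2\<close> by auto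
      qed
    next
      fix l1 l2 assume eq: "(l1, l2) = (if N2 \<le> Lh then (N1, N2) else (N1, Lh))"
      show "is_nash \<alpha> N1 N2 l1 l2"
      proof (cases "N2 \<le> Lh")
        case True
        hence l: "l1 = N1" "l2 = N2" using eq by auto
        have d: "0 \<le> Dv \<alpha> N1 N2" using below_root[of N1 Lh N2] Lh N1 N2 True by (cases "N2 = Lh") auto
        have "Dv \<alpha> N1 N2 \<le> Dv \<alpha> N2 N1" by (rule Dv_cmp_le[OF N1 N12])
        thus ?thesis unfolding l NE using d N1 N2 by simp
      next
        case False
        hence l: "l1 = N1" "l2 = Lh" using eq by auto
        have "Dv \<alpha> N1 Lh \<le> Dv \<alpha> Lh N1" by (rule Dv_cmp_le[OF N1 N1Lh])
        thus ?thesis unfolding l NE using Lh N1 False by simp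
      qed
    qed
  qed
  have regB: "\<exists>L. Lambda_pp \<alpha> = ereal L \<and> (\<forall>l1 l2. is_nash \<alpha> N1 N2 l1 l2 \<longleftrightarrow> (l1, l2) = (L, L))"
    if B: "ereal N1 > Lambda_pp \<alpha>"
  proof -
    have a4: "\<alpha> > 4" using B unfolding Lambda_pp_def by (cases "\<alpha> > 4") auto
    then obtain L where L: "Lambda_pp \<alpha> = ereal L" "L > 0" "Dv \<alpha> L L = 0" using Lpp_prop by blast
    have LN1: "L < N1" using B L by simp
    have DS: "Dv \<alpha> N1 N1 < 0" using above_root_sym[of L N1] L LN1 by simp
    show ?thesis
    proof (intro exI[of _ L] conjI allI iffI L(1))
      fix l1 l2 assume ne: "is_nash \<alpha> N1 N2 l1 l2"
      have r: "l1 \<le> N1" "l2 \<le> N2" "0 < l1" "0 < l2" using ne NE by auto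
      show "(l1, l2) = (L, L)"
      proof (cases "l1 = N1")
        case True
        show ?thesis
        proof (cases "l2 = N2")
          case l2: True
          have d: "0 \<le> Dv \<alpha> N1 N2" using F4 ne True l2 by simp
          show ?thesis
          proof (cases "N1 = N2")
            case True thus ?thesis using d DS by simp
          next
            case False
            hence "N1 < N2" using N12 by simp
            thus ?thesis using SC[of N1 N1 N2] d DS N1 by simp
          qed
        next
          case False
          hence "l2 < N2" using r by simp
          hence h: "l2 = Lh" "N1 \<le> l2" using F3 ne True by auto
          have "Dv \<alpha> N1 N1 \<ge> 0" using below_root[of N1 Lh N1] Lh N1 h by (cases "N1 = Lh") auto
          thus ?thesis using DS by simp
        qed
      next
        case False
        hence l1N: "l1 < N1" using r by simp
        show ?thesis
        proof (cases "l2 = N2")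
          case True thus ?thesis using F2[OF ne l1N] by simp
        next
          case False
          hence "l2 < N2" using r by simp
          hence h: "l1 = l2" "Dv \<alpha> l1 l1 = 0" using F1 ne l1N by auto
          have "l1 = L" using root_sym_ex[OF a4] h r L by auto
          thus ?thesis using h by simp
        qed
      qed
    next
      fix l1 l2 assume "(l1, l2) = (L, L)"
      hence l: "l1 = L" "l2 = L" by auto
      show "is_nash \<alpha> N1 N2 l1 l2" unfolding l NE using L LN1 N12 by simp
    qed
  qed
  show ?thesis
  proof (cases "ereal N1 \<le> Lambda_pp \<alpha>")
    case True
    note R = regA[OF True]
    let ?c = "if N2 \<le> Lh then (N1, N2) else (N1, Lh)"
    have ex: "\<exists>!p. is_nash \<alpha> N1 N2 (fst p) (snd p)"
    proof (rule ex1I[of _ ?c])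
      show "is_nash \<alpha> N1 N2 (fst ?c) (snd ?c)" using R[rule_format, of "fst ?c" "snd ?c"] by simp
      fix p assume "is_nash \<alpha> N1 N2 (fst p) (snd p)"
      thus "p = ?c" using R[rule_format, of "fst p" "snd p"] by simp
    qed
    have c1: "N2 \<le> Lh \<longrightarrow> is_nash \<alpha> N1 N2 N1 N2" using R by simp
    have c2: "N2 > Lh \<longrightarrow> is_nash \<alpha> N1 N2 N1 Lh" using R by simp
    show ?thesis using ex c1 c2 True unfolding Lh_def by auto
  next
    case False
    hence B: "ereal N1 > Lambda_pp \<alpha>" by simp
    obtain L where L: "Lambda_pp \<alpha> = ereal L" "\<forall>l1 l2. is_nash \<alpha> N1 N2 l1 l2 \<longleftrightarrow> (l1, l2) = (L, L)"
      using regB[OF B] by blast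
    have ex: "\<exists>!p. is_nash \<alpha> N1 N2 (fst p) (snd p)"
    proof (rule ex1I[of _ "(L, L)"])
      show "is_nash \<alpha> N1 N2 (fst (L, L)) (snd (L, L))" using L(2)[rule_format, of L L] by simp
      fix p assume "is_nash \<alpha> N1 N2 (fst p) (snd p)"
      thus "p = (L, L)" using L(2)[rule_format, of "fst p" "snd p"] by (simp add: prod_eq_iff)
    qed
    show ?thesis using ex L False by auto
  qed
qed

end

theorem theorem6:
  fixes \<alpha> N1 N2 :: real
  assumes "\<alpha> > 2" and "0 < N1" and "N1 \<le> N2"
  shows "(\<exists>!p. is_nash \<alpha> N1 N2 (fst p) (snd p)) \<and>
         (ereal N1 \<le> Lambda_pp \<alpha> \<and> N2 \<le> Lambda_hat \<alpha> N1 \<longrightarrow>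
           is_nash \<alpha> N1 N2 N1 N2) \<and>
         (ereal N1 \<le> Lambda_pp \<alpha> \<and> N2 > Lambda_hat \<alpha> N1 \<longrightarrow>
           is_nash \<alpha> N1 N2 N1 (Lambda_hat \<alpha> N1)) \<and>
         (ereal N1 > Lambda_pp \<alpha> \<longrightarrow>
           (\<exists>L. Lambda_pp \<alpha> = ereal L \<and> is_nash \<alpha> N1 N2 L L))"
  using main_ctx[OF assms] .

end
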